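(* Let $\Bbbk$ be an algebraically closed field of characteristic $0$ and let $P=\Bbbk[x_1,\dots,x_n]$ be a quadratic Poisson algebra. Let $G$ be a subgroup of $\mathrm{PAut}_{\mathrm{gr}}(P)$ and $\widetilde G=\{\widetilde\phi:\phi\in G\}$. Then $\widetilde G$ is a subgroup of the graded automorphism group of $U(P)$ and the map $\phi\mapsto\widetilde\phi$ is a group isomorphism $G\cong\widetilde G$.
   Context: $P$ has the standard grading and is quadratic: $\{P_1,P_1\}\subseteq P_2$. $\mathrm{PAut}_{\mathrm{gr}}(P)$ is the group of degree-preserving bijective Poisson (algebra and Lie) homomorphisms of $P$. $U(P)$ is the $\Bbbk$-algebra generated by $x_1,\dots,x_n,y_1,\dots,y_n$ (degree $1$) with relations $[x_i,x_j]=0$, $[y_i,y_j]=\sum_k\frac{\partial\{x_i,x_j\}}{\partial x_k}y_k$, $[y_i,x_j]=\{x_i,x_j\}$. For $\phi\in\mathrm{PAut}_{\mathrm{gr}}(P)$, $\widetilde\phi$ is the graded automorphism of $U(P)$ with $\widetilde\phi(x_i)=\phi(x_i)$, $\widetilde\phi(y_i)=\sum_j\frac{\partial\phi(x_i)}{\partial x_j}y_j$. *)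

theory Defs
  imports "HOL-Library.Poly_Mapping" "HOL-Computational_Algebra.Polynomial" "HOL-Algebra.Bij"
begin

type_synonym ('n, 'k) mpoly = "('n \<Rightarrow>\<^sub>0 nat) \<Rightarrow>\<^sub>0 'k"

definition Var :: "'n \<Rightarrow> ('n, 'k::comm_semiring_1) mpoly" where
  "Var i = Poly_Mapping.single (Poly_Mapping.single i 1) 1"

definition Const :: "'k \<Rightarrow> ('n, 'k::comm_semiring_1) mpoly" where
  "Const c = Poly_Mapping.single 0 c"

definition mdeg :: "('n::finite \<Rightarrow>\<^sub>0 nat) \<Rightarrow> nat" where
  "mdeg m = (\<Sum>i\<in>UNIV. Poly_Mapping.lookup m i)"

definition homogeneous :: "nat \<Rightarrow> ('n::finite, 'k::comm_semiring_1) mpoly \<Rightarrow> bool" where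
  "homogeneous d p \<longleftrightarrow> (\<forall>m\<in>Poly_Mapping.keys p. mdeg m = d)"

definition pd :: "'n \<Rightarrow> ('n, 'k::comm_semiring_1) mpoly \<Rightarrow> ('n, 'k) mpoly" where
  "pd i p = (\<Sum>m\<in>Poly_Mapping.keys p. Poly_Mapping.single (m - Poly_Mapping.single i 1)
                                 (of_nat (Poly_Mapping.lookup m i) * Poly_Mapping.lookup p m))"

definition poisson_bracket :: "(('n, 'k::field) mpoly \<Rightarrow> ('n, 'k) mpoly \<Rightarrow> ('n, 'k) mpoly) \<Rightarrow> bool" where
  "poisson_bracket br \<longleftrightarrow>
     (\<forall>p q r. br (p + q) r = br p r + br q r) \<and>
     (\<forall>c p q. br (Const c * p) q = Const c * br p q) \<and>
     (\<forall>p q. br p q = - br q p) \<and>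
     (\<forall>p q r. br p (br q r) + br q (br r p) + br r (br p q) = 0) \<and>
     (\<forall>p q r. br p (q * r) = br p q * r + q * br p r)"

definition quadratic_poisson :: "(('n::finite, 'k::field) mpoly \<Rightarrow> ('n, 'k) mpoly \<Rightarrow> ('n, 'k) mpoly) \<Rightarrow> bool" where
  "quadratic_poisson br \<longleftrightarrow> poisson_bracket br \<and>
     (\<forall>p q. homogeneous 1 p \<longrightarrow> homogeneous 1 q \<longrightarrow> homogeneous 2 (br p q))"

definition PAut_gr :: "(('n::finite, 'k::field) mpoly \<Rightarrow> ('n, 'k) mpoly \<Rightarrow> ('n, 'k) mpoly)
     \<Rightarrow> (('n, 'k) mpoly \<Rightarrow> ('n, 'k) mpoly) set" where
  "PAut_gr br = {\<phi>. bij \<phi> \<and>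
      (\<forall>p q. \<phi> (p + q) = \<phi> p + \<phi> q) \<and>
      (\<forall>p q. \<phi> (p * q) = \<phi> p * \<phi> q) \<and>
      \<phi> 1 = 1 \<and>
      (\<forall>c p. \<phi> (Const c * p) = Const c * \<phi> p) \<and>
      (\<forall>p q. \<phi> (br p q) = br (\<phi> p) (\<phi> q)) \<and>
      (\<forall>d p. homogeneous d p \<longrightarrow> homogeneous d (\<phi> p))}"

definition PAutGrp :: "(('n::finite, 'k::field) mpoly \<Rightarrow> ('n, 'k) mpoly \<Rightarrow> ('n, 'k) mpoly)
     \<Rightarrow> (('n, 'k) mpoly \<Rightarrow> ('n, 'k) mpoly) monoid" where
  "PAutGrp br = \<lparr>carrier = PAut_gr br, mult = (\<circ>), one = id\<rparr>"

datatype 'a fword = FW (fwlist: "'a list")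

instantiation fword :: (type) monoid_add
begin
definition zero_fword :: "'a fword" where "zero_fword = FW []"
definition plus_fword :: "'a fword \<Rightarrow> 'a fword \<Rightarrow> 'a fword" where
  "plus_fword u v = FW (fwlist u @ fwlist v)"
instance by standard (auto simp: zero_fword_def plus_fword_def)
end

type_synonym ('n, 'k) falg = "('n + 'n) fword \<Rightarrow>\<^sub>0 'k"

definition FConst :: "'k \<Rightarrow> ('n, 'k::field) falg" where
  "FConst c = Poly_Mapping.single 0 c"

definition Gen :: "'n + 'n \<Rightarrow> ('n, 'k::field) falg" where
  "Gen g = Poly_Mapping.single (FW [g]) 1"

abbreviation X :: "'n \<Rightarrow> ('n, 'k::field) falg" where "X i \<equiv> Gen (Inl i)"
abbreviation Y :: "'n \<Rightarrow> ('n, 'k::field) falg" where "Y i \<equiv> Gen (Inr i)"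

definition comm :: "('n, 'k::field) falg \<Rightarrow> ('n, 'k) falg \<Rightarrow> ('n, 'k) falg" where
  "comm a b = a * b - b * a"

definition free_ext :: "('n + 'n \<Rightarrow> ('n, 'k::field) falg) \<Rightarrow> ('n, 'k) falg \<Rightarrow> ('n, 'k) falg" where
  "free_ext h a = (\<Sum>w\<in>Poly_Mapping.keys a. FConst (Poly_Mapping.lookup a w) * prod_list (map h (fwlist w)))"

text \<open>image of a commutative polynomial in x's inside the free algebra (monomials are
  written as words in the x's in some order; in U(P) the x's commute, so the order is irrelevant)\<close>
definition mono_word :: "('n \<Rightarrow>\<^sub>0 nat) \<Rightarrow> 'n list" where
  "mono_word m = (SOME xs. \<forall>i. count_list xs i = Poly_Mapping.lookup m i)"

definition emb :: "('n, 'k::field) mpoly \<Rightarrow> ('n, 'k) falg" where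
  "emb p = (\<Sum>m\<in>Poly_Mapping.keys p. FConst (Poly_Mapping.lookup p m) * prod_list (map X (mono_word m)))"

definition Urels :: "(('n::finite, 'k::field) mpoly \<Rightarrow> ('n, 'k) mpoly \<Rightarrow> ('n, 'k) mpoly)
     \<Rightarrow> ('n, 'k) falg set" where
  "Urels br = (\<Union>i j.
      {comm (X i) (X j),
       comm (Y i) (Y j) - (\<Sum>k\<in>UNIV. emb (pd k (br (Var i) (Var j))) * Y k),
       comm (Y i) (X j) - emb (br (Var i) (Var j))})"

definition tsideal :: "('a::ring) set \<Rightarrow> 'a set" where
  "tsideal R = \<Inter>{I. R \<subseteq> I \<and> 0 \<in> I \<and> (\<forall>a\<in>I. \<forall>b\<in>I. a + b \<in> I) \<and>
                     (\<forall>a\<in>I. \<forall>r. r * a \<in> I \<and> a * r \<in> I)}"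

definition UI where "UI br = tsideal (Urels br)"

definition Ucls :: "_ \<Rightarrow> ('n::finite, 'k::field) falg \<Rightarrow> ('n, 'k) falg set" where
  "Ucls br a = {b. a - b \<in> UI br}"

definition Ucarrier where "Ucarrier br = range (Ucls br)"

definition Uadd where
  "Uadd br A B = {c. \<exists>a\<in>A. \<exists>b\<in>B. c - (a + b) \<in> UI br}"
definition Umult where
  "Umult br A B = {c. \<exists>a\<in>A. \<exists>b\<in>B. c - a * b \<in> UI br}"
definition Usmul where
  "Usmul br k A = {c. \<exists>a\<in>A. c - FConst k * a \<in> UI br}"
definition Uone where "Uone br = Ucls br 1"

definition fhom :: "nat \<Rightarrow> ('n, 'k::field) falg \<Rightarrow> bool" where
  "fhom d a \<longleftrightarrow> (\<forall>w\<in>Poly_Mapping.keys a. length (fwlist w) = d)"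

definition Udeg where "Udeg br d = Ucls br ` {a. fhom d a}"

definition GrAut_U where
  "GrAut_U br = {\<Phi>. \<Phi> \<in> Bij (Ucarrier br) \<and>
      (\<forall>A\<in>Ucarrier br. \<forall>B\<in>Ucarrier br. \<Phi> (Uadd br A B) = Uadd br (\<Phi> A) (\<Phi> B)) \<and>
      (\<forall>A\<in>Ucarrier br. \<forall>B\<in>Ucarrier br. \<Phi> (Umult br A B) = Umult br (\<Phi> A) (\<Phi> B)) \<and>
      (\<forall>c. \<forall>A\<in>Ucarrier br. \<Phi> (Usmul br c A) = Usmul br c (\<Phi> A)) \<and>
      \<Phi> (Uone br) = Uone br \<and>
      (\<forall>d. \<Phi> ` Udeg br d \<subseteq> Udeg br d)}"

definition GrAutGrp_U where
  "GrAutGrp_U br = (BijGroup (Ucarrier br))\<lparr>carrier := GrAut_U br\<rparr>"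

definition tilde_gen :: "(('n::finite, 'k::field) mpoly \<Rightarrow> ('n, 'k) mpoly) \<Rightarrow> 'n + 'n \<Rightarrow> ('n, 'k) falg" where
  "tilde_gen \<phi> g = (case g of Inl i \<Rightarrow> emb (\<phi> (Var i))
                            | Inr i \<Rightarrow> (\<Sum>j\<in>UNIV. emb (pd j (\<phi> (Var i))) * Y j))"

definition tilde where
  "tilde br \<phi> = (\<lambda>A\<in>Ucarrier br. Ucls br (free_ext (tilde_gen \<phi>) (SOME a. a \<in> A)))"

end

theory Submission
  imports Defs "HOL-Library.Multiset"
begin


abbreviation lk where "lk \<equiv> Poly_Mapping.lookup"
abbreviation ks where "ks \<equiv> Poly_Mapping.keys"
abbreviation sg where "sg \<equiv> Poly_Mapping.single"

lemma pm_sum_single: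
  assumes "finite S" "ks p \<subseteq> S"
  shows "(\<Sum>m\<in>S. sg m (lk p m)) = p"
proof (rule poly_mapping_eqI)
  fix k
  have "lk (\<Sum>m\<in>S. sg m (lk p m)) k = (\<Sum>m\<in>S. if m = k then lk p m else 0)"
    by (simp add: lookup_sum lookup_single when_def)
  also have "\<dots> = lk p k"
    using assms by (auto simp: sum.delta' in_keys_iff)
  finally show "lk (\<Sum>m\<in>S. sg m (lk p m)) k = lk p k" .
qed

lemma pm_induct[case_names zero single add]:
  fixes p :: "'a \<Rightarrow>\<^sub>0 'b::comm_monoid_add"
  assumes "P 0" "\<And>k v. P (sg k v)" "\<And>a b. P a \<Longrightarrow> P b \<Longrightarrow> P (a+b)"
  shows "P p"
proof -
  have "P (\<Sum>m\<in>S. sg m (lk p m))" if "finite S" for S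
    using that by (induction S rule: finite_induct) (auto intro: assms)
  then show ?thesis using pm_sum_single[of "ks p" p] by (metis finite_keys order_refl)
qed

lemma sum_keys_superset:
  assumes "finite S" "ks p \<subseteq> S" "\<And>m. g m 0 = 0"
  shows "(\<Sum>m\<in>ks p. g m (lk p m)) = (\<Sum>m\<in>S. g m (lk p m))"
  by (rule sum.mono_neutral_left) (use assms in \<open>auto simp: in_keys_iff\<close>)

lemma keys_sum_sub: "ks (sum f A) \<subseteq> (\<Union>a\<in>A. ks (f a))"
proof (induction A rule: infinite_finite_induct)
  case (insert x F)
  then show ?case using keys_add[of "f x" "sum f F"] by auto
qed auto

lemma lookup_Const_mult: "lk (Const c * p) m = c * lk p m"
proof (induction p rule: pm_induct)
  case (single k v)
  then show ?case by (simp add: Const_def mult_single lookup_single when_def)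
next
  case (add a b) then show ?case by (simp add: distrib_left lookup_add)
qed simp

lemma Const_0[simp]: "Const 0 = 0" by (simp add: Const_def)
lemma Const_1[simp]: "Const 1 = 1" by (simp add: Const_def)
lemma Const_add: "Const (a + b) = Const a + Const b" by (simp add: Const_def single_add)
lemma Const_mult: "Const (a * b) = Const a * Const b" by (simp add: Const_def mult_single)
lemma Const_sum: "Const (sum f A) = (\<Sum>a\<in>A. Const (f a))"
  by (induction A rule: infinite_finite_induct) (auto simp: Const_add)
lemma Const_mult_single: "Const c * sg m d = sg m (c * d)"
  by (simp add: Const_def mult_single)

lemma Var_pow: "(Var i :: ('n,'k::comm_semiring_1) mpoly) ^ k = sg (sg i k) 1"
proof (induction k)
  case 0 then show ?case by simp
next
  case (Suc k) then show ?case
    by (simp add: Var_def mult_single single_add[symmetric] add.commute)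
qed

lemma prod_singles:
  "(\<Prod>i\<in>A. (sg (f i) 1 :: ('a::comm_monoid_add) \<Rightarrow>\<^sub>0 ('k::comm_semiring_1))) = sg (\<Sum>i\<in>A. f i) 1"
  by (induction A rule: infinite_finite_induct) (auto simp: mult_single)

lemma single_as_prod:
  "(sg m c :: ('n::finite,'k::comm_semiring_1) mpoly) = Const c * (\<Prod>i\<in>UNIV. Var i ^ lk m i)"
proof -
  have "(\<Sum>i\<in>UNIV. sg i (lk m i)) = m" by (rule pm_sum_single) auto
  then show ?thesis by (simp add: Var_pow prod_singles Const_mult_single)
qed

lemma mpoly_induct[case_names Const Var add mult]:
  fixes p :: "('n::finite,'k::comm_semiring_1) mpoly"
  assumes C: "\<And>c. P (Const c)" and V: "\<And>i. P (Var i)"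
    and A: "\<And>p q. P p \<Longrightarrow> P q \<Longrightarrow> P (p+q)" and M: "\<And>p q. P p \<Longrightarrow> P q \<Longrightarrow> P (p*q)"
  shows "P p"
proof (induction p rule: pm_induct)
  case zero then show ?case using C[of 0] by simp
next
  case (single m c)
  have pw: "P (Var i ^ k)" for i k
    by (induction k) (use C[of 1] V M in auto)
  have "P (\<Prod>i\<in>B. Var i ^ lk m i)" for B
    by (induction B rule: infinite_finite_induct) (use C[of 1] pw M in auto)
  then show ?case using single_as_prod[of m c] M C by metis
next
  case (add a b) then show ?case using A by blast
qed

section \<open>Partial derivatives\<close>

lemma pd_sum_superset:
  assumes "finite S" "ks p \<subseteq> S"
  shows "pd i p = (\<Sum>m\<in>S. sg (m - sg i 1) (of_nat (lk m i) * lk p m))"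
  unfolding pd_def by (rule sum_keys_superset) (use assms in auto)

lemma pd_add: "pd i (p + q) = pd i p + pd i q"
proof -
  let ?S = "ks p \<union> ks q"
  have "pd i (p + q) = (\<Sum>m\<in>?S. sg (m - sg i 1) (of_nat (lk m i) * lk (p+q) m))"
    by (rule pd_sum_superset) (use keys_add[of p q] in auto)
  also have "\<dots> = (\<Sum>m\<in>?S. sg (m - sg i 1) (of_nat (lk m i) * lk p m))
     + (\<Sum>m\<in>?S. sg (m - sg i 1) (of_nat (lk m i) * lk q m))"
    by (simp add: lookup_add distrib_left single_add sum.distrib)
  also have "\<dots> = pd i p + pd i q"
    by (subst (1 2) pd_sum_superset[of ?S]) auto
  finally show ?thesis .
qed

lemma pd_zero[simp]: "pd i 0 = 0" by (simp add: pd_def)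

lemma pd_single: "pd i (sg m c) = sg (m - sg i 1) (of_nat (lk m i) * c)"
  by (subst pd_sum_superset[of "{m}"]) auto

lemma pd_sum: "pd i (sum f A) = (\<Sum>a\<in>A. pd i (f a))"
  by (induction A rule: infinite_finite_induct) (auto simp: pd_add)

lemma pd_uminus: "pd i (- p :: ('n,'k::comm_ring_1) mpoly) = - pd i p"
  using pd_add[of i p "-p"] by (metis add.right_inverse neg_eq_iff_add_eq_0 pd_zero)

lemma pd_diff: "pd i (p - q :: ('n,'k::comm_ring_1) mpoly) = pd i p - pd i q"
  using pd_add[of i p "-q"] pd_uminus[of i q] by simp

lemma pd_Const_mult: "pd i (Const c * p) = Const c * pd i p"
proof (induction p rule: pm_induct)
  case (single k v)
  then show ?case by (simp add: Const_mult_single pd_single ac_simps)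
next
  case (add a b) then show ?case by (simp add: distrib_left pd_add)
qed simp

lemma pd_Const: "pd i (Const c) = 0"
  by (simp add: Const_def pd_single)

lemma pd_Var: "pd i (Var j) = Const (if i = j then 1 else 0)"
  by (auto simp: Var_def pd_single lookup_single Const_def)

lemma minus_single_add1:
  fixes a b :: "'n \<Rightarrow>\<^sub>0 nat"
  assumes "lk a k > 0"
  shows "a - sg k 1 + b = a + b - sg k 1"
  by (rule poly_mapping_eqI) (use assms in \<open>auto simp: lookup_add lookup_minus lookup_single when_def\<close>)

lemma minus_single_add2:
  fixes a b :: "'n \<Rightarrow>\<^sub>0 nat"
  assumes "lk b k > 0"
  shows "a + (b - sg k 1) = a + b - sg k 1"
  by (rule poly_mapping_eqI) (use assms in \<open>auto simp: lookup_add lookup_minus lookup_single when_def\<close>)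

lemma pd_mult_single:
  "pd k (sg a c * sg b d :: ('n,'k::comm_semiring_1) mpoly) = pd k (sg a c) * sg b d + sg a c * pd k (sg b d)"
proof -
  have L: "pd k (sg a c * sg b d) = sg (a + b - sg k 1) (of_nat (lk a k) * c * d + c * (of_nat (lk b k) * d))"
    by (simp add: mult_single pd_single lookup_add algebra_simps)
  have R1: "pd k (sg a c) * sg b d = sg (a + b - sg k 1) (of_nat (lk a k) * c * d)"
    by (cases "lk a k > 0") (auto simp: pd_single mult_single minus_single_add1[unfolded One_nat_def])
  have R2: "sg a c * pd k (sg b d) = sg (a + b - sg k 1) (c * (of_nat (lk b k) * d))"
    by (cases "lk b k > 0") (auto simp: pd_single mult_single minus_single_add2[unfolded One_nat_def])
  show ?thesis by (simp add: L R1 R2 single_add)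
qed

lemma pd_mult: "pd k (p * q :: ('n,'k::comm_semiring_1) mpoly) = pd k p * q + p * pd k q"
proof (induction p rule: pm_induct)
  case (single a c)
  show ?case
  proof (induction q rule: pm_induct)
    case (single b d) then show ?case by (rule pd_mult_single)
  next
    case (add q1 q2) then show ?case by (simp add: algebra_simps pd_add)
  qed simp
next
  case (add p1 p2) then show ?case by (simp add: algebra_simps pd_add)
qed simp

section \<open>Poisson brackets\<close>

context
  fixes br :: "('n::finite, 'k::field) mpoly \<Rightarrow> ('n, 'k) mpoly \<Rightarrow> ('n, 'k) mpoly"
  assumes PB: "poisson_bracket br"
begin

lemma br_add1: "br (p + q) r = br p r + br q r" using PB unfolding poisson_bracket_def by blast
lemma br_Const1: "br (Const c * p) q = Const c * br p q" using PB unfolding poisson_bracket_def by blast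
lemma br_skew: "br p q = - br q p" using PB unfolding poisson_bracket_def by blast
lemma br_jacobi: "br p (br q r) + br q (br r p) + br r (br p q) = 0" using PB unfolding poisson_bracket_def by blast
lemma br_leibniz: "br p (q * r) = br p q * r + q * br p r" using PB unfolding poisson_bracket_def by blast

lemma br_add2: "br p (q + r) = br p q + br p r"
proof -
  have "br p (q + r) = - br (q + r) p" by (rule br_skew)
  also have "\<dots> = - br q p - br r p" by (simp add: br_add1)
  also have "\<dots> = br p q + br p r" by (simp add: br_skew[of p q] br_skew[of p r])
  finally show ?thesis .
qed

lemma br_zero1[simp]: "br 0 q = 0"
  using br_add1[of 0 0 q] by simp
lemma br_zero2[simp]: "br q 0 = 0"
  using br_add2[of q 0 0] by simp

lemma br_uminus1: "br (- p) q = - br p q"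
  using br_add1[of p "-p" q] by (metis add.right_inverse br_zero1 neg_eq_iff_add_eq_0)
lemma br_uminus2: "br q (- p) = - br q p"
  using br_add2[of q p "-p"] by (metis add.right_inverse br_zero2 neg_eq_iff_add_eq_0)
lemma br_diff1: "br (p - r) q = br p q - br r q"
  using br_add1[of p "-r" q] br_uminus1[of r q] by simp
lemma br_diff2: "br q (p - r) = br q p - br q r"
  using br_add2[of q p "-r"] br_uminus2[of q r] by simp

lemma br_sum1: "br (sum f A) q = (\<Sum>a\<in>A. br (f a) q)"
  by (induction A rule: infinite_finite_induct) (auto simp: br_add1)
lemma br_sum2: "br q (sum f A) = (\<Sum>a\<in>A. br q (f a))"
  by (induction A rule: infinite_finite_induct) (auto simp: br_add2)

lemma br_Const2: "br p (Const c * q) = Const c * br p q"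
proof -
  have "br p (Const c * q) = - br (Const c * q) p" by (rule br_skew)
  also have "\<dots> = - (Const c * br q p)" by (simp add: br_Const1)
  also have "\<dots> = Const c * br p q" by (simp add: br_skew[of p q])
  finally show ?thesis .
qed

lemma br_one2[simp]: "br p 1 = 0"
  using br_leibniz[of p 1 1] by simp
lemma br_one1[simp]: "br 1 p = 0"
  by (subst br_skew) simp

lemma br_ConstL[simp]: "br (Const c) p = 0"
  using br_Const1[of c 1 p] by simp
lemma br_ConstR[simp]: "br p (Const c) = 0"
  using br_Const2[of p c 1] by simp

lemma br_leibniz1: "br (p * q) r = br p r * q + p * br q r"
proof -
  have "br (p * q) r = - br r (p * q)" by (rule br_skew)
  also have "\<dots> = - (br r p * q + p * br r q)" by (simp add: br_leibniz)
  also have "\<dots> = br p r * q + p * br q r"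
    using br_skew[of r p] br_skew[of r q] by (simp add: algebra_simps)
  finally show ?thesis .
qed

lemma br_expand: "br f p = (\<Sum>k\<in>UNIV. pd k f * br (Var k) p)"
proof (induction f rule: mpoly_induct)
  case (Const c) then show ?case by (simp add: pd_Const)
next
  case (Var i)
  have "(\<Sum>k\<in>UNIV. pd k (Var i) * br (Var k) p) = (\<Sum>k\<in>UNIV. if k = i then br (Var k) p else 0)"
    by (rule sum.cong) (auto simp: pd_Var)
  then show ?case by simp
next
  case (add f g) then show ?case by (simp add: br_add1 pd_add distrib_right sum.distrib)
next
  case (mult f g)
  have "br (f * g) p = br f p * g + f * br g p" by (rule br_leibniz1)
  also have "\<dots> = (\<Sum>k\<in>UNIV. (pd k f * g + f * pd k g) * br (Var k) p)"
    by (simp add: mult sum_distrib_left sum_distrib_right sum.distrib algebra_simps)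
  finally show ?case by (simp add: pd_mult)
qed

end


section \<open>Graded automorphisms of P\<close>

lemma single1_eq_iff: "(sg k (1::nat) = sg j 1) \<longleftrightarrow> k = j"
  by (metis lookup_single_eq lookup_single_not_eq zero_neq_one)

lemma single1_eq_iff': "(sg k (Suc 0) = sg j (Suc 0)) \<longleftrightarrow> k = j"
  using single1_eq_iff by simp

lemma mdeg_single1: "mdeg (sg k (1::nat) :: 'n::finite \<Rightarrow>\<^sub>0 nat) = 1"
proof -
  have "mdeg (sg k (1::nat) :: 'n \<Rightarrow>\<^sub>0 nat) = (\<Sum>i\<in>UNIV. if i = k then 1 else 0)"
    unfolding mdeg_def by (rule sum.cong) (auto simp: lookup_single when_def)
  then show ?thesis by simp
qed

lemma mdeg_single1': "mdeg (sg k (Suc 0) :: 'n::finite \<Rightarrow>\<^sub>0 nat) = Suc 0"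
  using mdeg_single1 by simp

lemma mdeg_eq_1: "mdeg (m :: 'n::finite \<Rightarrow>\<^sub>0 nat) = 1 \<longleftrightarrow> (\<exists>k. m = sg k 1)"
proof
  assume "mdeg m = 1"
  then obtain a where a: "lk m a = 1" "\<forall>b. a \<noteq> b \<longrightarrow> lk m b = 0"
    unfolding mdeg_def sum_eq_1_iff[OF finite_UNIV] by auto
  have "m = sg a 1"
    by (rule poly_mapping_eqI) (use a in \<open>auto simp: lookup_single when_def\<close>)
  then show "\<exists>k. m = sg k 1" ..
qed (auto simp: mdeg_single1 mdeg_single1')

lemma lookup_Var: "lk (Var k) m = (1 when sg k 1 = m)"
  by (simp add: Var_def lookup_single)

lemma hom1_expand:
  fixes q :: "('n::finite, 'k::field) mpoly"
  assumes "homogeneous 1 q"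
  shows "q = (\<Sum>k\<in>UNIV. Const (lk q (sg k 1)) * Var k)"
proof (rule poly_mapping_eqI)
  fix m
  have L: "lk (\<Sum>k\<in>UNIV. Const (lk q (sg k 1)) * Var k) m = (\<Sum>k\<in>UNIV. if sg k 1 = m then lk q (sg k 1) else 0)"
    unfolding lookup_sum by (rule sum.cong) (auto simp: lookup_Const_mult lookup_Var when_def)
  show "lk q m = lk (\<Sum>k\<in>UNIV. Const (lk q (sg k 1)) * Var k) m"
  proof (cases "\<exists>j. m = sg j 1")
    case True
    then obtain j where j: "m = sg j 1" by blast
    have "(\<Sum>k\<in>UNIV. if sg k 1 = m then lk q (sg k 1) else 0) = (\<Sum>k\<in>UNIV. if k = j then lk q (sg k 1) else 0)"
      by (rule sum.cong) (auto simp: j single1_eq_iff single1_eq_iff')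
    then show ?thesis using L j by simp
  next
    case False
    then have "m \<notin> ks q" using assms mdeg_eq_1[of m] unfolding homogeneous_def by auto
    moreover have "(\<Sum>k\<in>UNIV. if sg k 1 = m then lk q (sg k 1) else 0) = 0"
      using False by (intro sum.neutral) auto
    ultimately show ?thesis using L by (simp add: in_keys_iff)
  qed
qed

lemma homogeneous_Var: "homogeneous 1 (Var i :: ('n::finite, 'k::field) mpoly)"
  by (simp add: homogeneous_def Var_def mdeg_single1 mdeg_single1')

context
  fixes br :: "('n::finite, 'k::field) mpoly \<Rightarrow> ('n, 'k) mpoly \<Rightarrow> ('n, 'k) mpoly"
    and \<phi> :: "('n, 'k) mpoly \<Rightarrow> ('n, 'k) mpoly"
  assumes phi: "\<phi> \<in> PAut_gr br"
begin

lemma phi_bij: "bij \<phi>" using phi unfolding PAut_gr_def by blast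
lemma phi_add: "\<phi> (p + q) = \<phi> p + \<phi> q" using phi unfolding PAut_gr_def by blast
lemma phi_mult: "\<phi> (p * q) = \<phi> p * \<phi> q" using phi unfolding PAut_gr_def by blast
lemma phi_one[simp]: "\<phi> 1 = 1" using phi unfolding PAut_gr_def by blast
lemma phi_Const_mult: "\<phi> (Const c * p) = Const c * \<phi> p" using phi unfolding PAut_gr_def by blast
lemma phi_br: "\<phi> (br p q) = br (\<phi> p) (\<phi> q)" using phi unfolding PAut_gr_def by blast
lemma phi_hom: "homogeneous d p \<Longrightarrow> homogeneous d (\<phi> p)" using phi unfolding PAut_gr_def by blast

lemma phi_zero[simp]: "\<phi> 0 = 0" using phi_add[of 0 0] by simp
lemma phi_uminus: "\<phi> (- p) = - \<phi> p"
  using phi_add[of p "-p"] by (metis add.right_inverse neg_eq_iff_add_eq_0 phi_zero)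
lemma phi_diff: "\<phi> (p - q) = \<phi> p - \<phi> q"
  using phi_add[of p "-q"] phi_uminus[of q] by simp
lemma phi_sum: "\<phi> (sum f A) = (\<Sum>a\<in>A. \<phi> (f a))"
  by (induction A rule: infinite_finite_induct) (auto simp: phi_add)
lemma phi_Const[simp]: "\<phi> (Const c) = Const c"
  using phi_Const_mult[of c 1] by simp

lemma chain_rule: "pd l (\<phi> f) = (\<Sum>k\<in>UNIV. \<phi> (pd k f) * pd l (\<phi> (Var k)))"
proof (induction f rule: mpoly_induct)
  case (Const c) then show ?case by (simp add: pd_Const)
next
  case (Var i)
  have "(\<Sum>k\<in>UNIV. \<phi> (pd k (Var i)) * pd l (\<phi> (Var k))) = (\<Sum>k\<in>UNIV. if k = i then pd l (\<phi> (Var k)) else 0)"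
    by (rule sum.cong) (auto simp: pd_Var)
  then show ?case by simp
next
  case (add f g) then show ?case by (simp add: phi_add pd_add distrib_right sum.distrib)
next
  case (mult f g)
  have "pd l (\<phi> (f * g)) = pd l (\<phi> f) * \<phi> g + \<phi> f * pd l (\<phi> g)" by (simp add: phi_mult pd_mult)
  also have "\<dots> = (\<Sum>k\<in>UNIV. (\<phi> (pd k f) * \<phi> g + \<phi> f * \<phi> (pd k g)) * pd l (\<phi> (Var k)))"
    by (simp add: mult sum_distrib_left sum_distrib_right sum.distrib algebra_simps)
  finally show ?case by (simp add: pd_mult phi_add phi_mult)
qed

definition cf :: "'n \<Rightarrow> 'n \<Rightarrow> 'k" where "cf i k = lk (\<phi> (Var i)) (sg k 1)"

lemma phi_Var: "\<phi> (Var i) = (\<Sum>k\<in>UNIV. Const (cf i k) * Var k)"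
  unfolding cf_def by (rule hom1_expand) (rule phi_hom[OF homogeneous_Var])

lemma pd_phi_Var: "pd l (\<phi> (Var i)) = Const (cf i l)"
proof -
  have "pd l (\<phi> (Var i)) = (\<Sum>k\<in>UNIV. Const (cf i k) * Const (if l = k then 1 else 0))"
    by (subst phi_Var) (simp add: pd_sum pd_Const_mult pd_Var)
  also have "\<dots> = (\<Sum>k\<in>UNIV. if k = l then Const (cf i k) else 0)"
    by (rule sum.cong) auto
  finally show ?thesis by simp
qed

end


lemma hom_single: "homogeneous (mdeg m) (sg m c)"
  by (simp add: homogeneous_def)

lemma keys_diff_sub: "ks (a - b) \<subseteq> ks a \<union> ks b"
  by (auto simp: in_keys_iff lookup_minus)

lemma hom_diff: "homogeneous d a \<Longrightarrow> homogeneous d b \<Longrightarrow> homogeneous d (a - b)"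
  using keys_diff_sub[of a b] unfolding homogeneous_def by blast

lemma hom_sum: "(\<And>a. a \<in> A \<Longrightarrow> homogeneous d (f a)) \<Longrightarrow> homogeneous d (sum f A)"
  using keys_sum_sub[of f A] unfolding homogeneous_def by blast

lemma inv_hom:
  assumes phi: "\<phi> \<in> PAut_gr br" and h: "homogeneous d (\<phi> q)"
  shows "homogeneous d q"
proof -
  define S where "S = {m\<in>ks q. mdeg m = d}"
  define qd where "qd = (\<Sum>m\<in>S. sg m (lk q m))"
  define B where "B = q - qd"
  have fS: "finite S" unfolding S_def by auto
  have hqd: "homogeneous d qd" unfolding qd_def
    by (rule hom_sum) (auto simp: S_def homogeneous_def)
  have lqd: "lk qd m = (if m \<in> S then lk q m else 0)" for m
    using fS unfolding qd_def by (simp add: lookup_sum lookup_single when_def sum.delta')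
  have kB: "mdeg m \<noteq> d" if "m \<in> ks B" for m
  proof
    assume "mdeg m = d"
    then have "lk B m = 0" unfolding B_def by (auto simp: lookup_minus lqd S_def in_keys_iff)
    then show False using that by (simp add: in_keys_iff)
  qed
  have "B = (\<Sum>m\<in>ks B. sg m (lk B m))" by (rule pm_sum_single[symmetric]) auto
  then have "\<phi> B = (\<Sum>m\<in>ks B. \<phi> (sg m (lk B m)))" using phi_sum[OF phi] by metis
  then have k1: "ks (\<phi> B) \<subseteq> (\<Union>m\<in>ks B. ks (\<phi> (sg m (lk B m))))"
    using keys_sum_sub by metis
  have k2: "mdeg m' \<noteq> d" if m'_in: "m' \<in> ks (\<phi> B)" for m'
  proof -
    obtain m where m: "m \<in> ks B" "m' \<in> ks (\<phi> (sg m (lk B m)))" using k1 m'_in by blast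
    have "homogeneous (mdeg m) (\<phi> (sg m (lk B m)))" by (rule phi_hom[OF phi hom_single])
    then have "mdeg m' = mdeg m" using m unfolding homogeneous_def by blast
    then show ?thesis using kB m by simp
  qed
  have "\<phi> B = \<phi> q - \<phi> qd" unfolding B_def by (rule phi_diff[OF phi])
  then have "homogeneous d (\<phi> B)" using hom_diff[OF h phi_hom[OF phi hqd]] by simp
  then have "ks (\<phi> B) = {}" using k2 unfolding homogeneous_def by blast
  then have "\<phi> B = 0" by simp
  then have "\<phi> B = \<phi> 0" using phi_zero[OF phi] by simp
  then have "B = 0" using bij_is_inj[OF phi_bij[OF phi]] by (simp add: inj_eq)
  then have "q = qd" unfolding B_def by simp
  then show ?thesis using hqd by simp
qed

lemma inv_PAut:
  assumes phi: "\<phi> \<in> PAut_gr br"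
  shows "inv_into UNIV \<phi> \<in> PAut_gr br"
proof -
  let ?\<psi> = "inv_into UNIV \<phi>"
  have b: "bij \<phi>" by (rule phi_bij[OF phi])
  have fi: "\<phi> (?\<psi> x) = x" for x using b by (simp add: bij_is_surj surj_f_inv_f)
  have inj: "inj \<phi>" using b by (rule bij_is_inj)
  have eq: "?\<psi> a = b' \<longleftrightarrow> a = \<phi> b'" for a b' using fi inj by (metis inv_f_f)
  show ?thesis unfolding PAut_gr_def
  proof (intro CollectI conjI allI impI)
    show "bij ?\<psi>" using b by (rule bij_imp_bij_inv)
    show "?\<psi> (p + q) = ?\<psi> p + ?\<psi> q" for p q by (simp add: eq phi_add[OF phi] fi)
    show "?\<psi> (p * q) = ?\<psi> p * ?\<psi> q" for p q by (simp add: eq phi_mult[OF phi] fi)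
    show "?\<psi> 1 = 1" by (simp add: eq phi_one[OF phi])
    show "?\<psi> (Const c * p) = Const c * ?\<psi> p" for c p by (simp add: eq phi_Const_mult[OF phi] fi)
    show "?\<psi> (br p q) = br (?\<psi> p) (?\<psi> q)" for p q by (simp add: eq phi_br[OF phi] fi)
    show "homogeneous d (?\<psi> p)" if "homogeneous d p" for d p
      by (rule inv_hom[OF phi]) (simp add: fi that)
  qed
qed

lemma PAut_m_inv:
  assumes phi: "\<phi> \<in> PAut_gr br"
  shows "inv\<^bsub>PAutGrp br\<^esub> \<phi> = inv_into UNIV \<phi>"
  unfolding m_inv_def
proof (rule the_equality)
  have b: "bij \<phi>" by (rule phi_bij[OF phi])
  show "inv_into UNIV \<phi> \<in> carrier (PAutGrp br) \<and> \<phi> \<otimes>\<^bsub>PAutGrp br\<^esub> inv_into UNIV \<phi> = \<one>\<^bsub>PAutGrp br\<^esub> \<and>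
        inv_into UNIV \<phi> \<otimes>\<^bsub>PAutGrp br\<^esub> \<phi> = \<one>\<^bsub>PAutGrp br\<^esub>"
    using inv_PAut[OF phi] b surj_iff[of \<phi>] inj_iff[of \<phi>] by (auto simp: PAutGrp_def bij_def)
  fix y assume "y \<in> carrier (PAutGrp br) \<and> \<phi> \<otimes>\<^bsub>PAutGrp br\<^esub> y = \<one>\<^bsub>PAutGrp br\<^esub> \<and> y \<otimes>\<^bsub>PAutGrp br\<^esub> \<phi> = \<one>\<^bsub>PAutGrp br\<^esub>"
  then have "\<phi> \<circ> y = id" "y \<circ> \<phi> = id" by (auto simp: PAutGrp_def)
  then show "y = inv_into UNIV \<phi>" using inv_unique_comp by metis
qed


section \<open>Free algebra\<close>

lemma fwlist_plus[simp]: "fwlist (u + v) = fwlist u @ fwlist v" by (simp add: plus_fword_def)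
lemma fwlist_zero[simp]: "fwlist 0 = []" by (simp add: zero_fword_def)
lemma FW_Nil: "FW [] = 0" by (simp add: zero_fword_def)

lemma FConst_0[simp]: "FConst 0 = 0" by (simp add: FConst_def)
lemma FConst_1[simp]: "FConst 1 = 1" by (simp add: FConst_def)
lemma FConst_add: "FConst (a + b) = FConst a + FConst b" by (simp add: FConst_def single_add)
lemma FConst_mult: "FConst (a * b) = FConst a * FConst b" by (simp add: FConst_def mult_single)
lemma FConst_uminus: "FConst (- a) = - FConst a" by (simp add: FConst_def single_uminus)
lemma FConst_diff: "FConst (a - b) = FConst a - FConst b" by (simp add: FConst_def single_diff)
lemma FConst_sum: "FConst (sum f A) = (\<Sum>a\<in>A. FConst (f a))"
  by (induction A rule: infinite_finite_induct) (auto simp: FConst_add)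
lemma FConst_mult_single: "FConst c * sg w d = sg w (c * d)" by (simp add: FConst_def mult_single)
lemma single_mult_FConst: "sg w d * FConst c = sg w (d * c)" by (simp add: FConst_def mult_single)

lemma FConst_comm: "FConst c * a = a * (FConst c :: ('n,'k::field) falg)"
proof (induction a rule: pm_induct)
  case (single k v) then show ?case by (simp add: FConst_mult_single single_mult_FConst mult.commute)
next
  case (add a b) then show ?case by (simp add: algebra_simps)
qed simp

lemma Gen_word: "prod_list (map Gen w) = (sg (FW w) 1 :: ('n,'k::field) falg)"
proof (induction w)
  case Nil then show ?case by (simp add: FW_Nil)
next
  case (Cons g w) then show ?case by (simp add: Gen_def mult_single plus_fword_def)
qed

lemma free_ext_superset:
  assumes "finite S" "ks a \<subseteq> S"
  shows "free_ext h a = (\<Sum>w\<in>S. FConst (lk a w) * prod_list (map h (fwlist w)))"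
  unfolding free_ext_def by (rule sum_keys_superset) (use assms in auto)

lemma free_ext_add: "free_ext h (a + b) = free_ext h a + free_ext h b"
proof -
  let ?S = "ks a \<union> ks b"
  have "free_ext h (a + b) = (\<Sum>w\<in>?S. FConst (lk (a+b) w) * prod_list (map h (fwlist w)))"
    by (rule free_ext_superset) (use keys_add[of a b] in auto)
  also have "\<dots> = (\<Sum>w\<in>?S. FConst (lk a w) * prod_list (map h (fwlist w)))
     + (\<Sum>w\<in>?S. FConst (lk b w) * prod_list (map h (fwlist w)))"
    by (simp add: lookup_add FConst_add distrib_right sum.distrib)
  also have "\<dots> = free_ext h a + free_ext h b"
    by (subst (1 2) free_ext_superset[of ?S]) auto
  finally show ?thesis .
qed

lemma free_ext_zero[simp]: "free_ext h 0 = 0" by (simp add: free_ext_def)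

lemma free_ext_single: "free_ext h (sg w c) = FConst c * prod_list (map h (fwlist w))"
  by (subst free_ext_superset[of "{w}"]) auto

lemma free_ext_uminus: "free_ext h (- a) = - free_ext h a"
  using free_ext_add[of h a "-a"] by (metis add.right_inverse neg_eq_iff_add_eq_0 free_ext_zero)
lemma free_ext_diff: "free_ext h (a - b) = free_ext h a - free_ext h b"
  using free_ext_add[of h a "-b"] free_ext_uminus[of h b] by simp
lemma free_ext_sum: "free_ext h (sum f A) = (\<Sum>x\<in>A. free_ext h (f x))"
  by (induction A rule: infinite_finite_induct) (auto simp: free_ext_add)

lemma FConst_comm_prod: "FConst c * prod_list xs = prod_list xs * (FConst c :: ('n,'k::field) falg)"
  by (rule FConst_comm)

lemma free_ext_mult: "free_ext h (a * b) = free_ext h a * free_ext h b"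
proof (induction a rule: pm_induct)
  case (single u c)
  show ?case
  proof (induction b rule: pm_induct)
    case (single v d)
    have "free_ext h (sg u c * sg v d) = FConst c * FConst d * (prod_list (map h (fwlist u)) * prod_list (map h (fwlist v)))"
      by (simp add: mult_single free_ext_single FConst_mult)
    also have "\<dots> = FConst c * (FConst d * prod_list (map h (fwlist u))) * prod_list (map h (fwlist v))"
      by (simp add: mult.assoc)
    also have "\<dots> = FConst c * (prod_list (map h (fwlist u)) * FConst d) * prod_list (map h (fwlist v))"
      by (simp add: FConst_comm)
    also have "\<dots> = free_ext h (sg u c) * free_ext h (sg v d)"
      by (simp add: free_ext_single mult.assoc)
    finally show ?case .
  next
    case (add q1 q2) then show ?case by (simp add: distrib_left free_ext_add)
  qed simp
next
  case (add p1 p2) then show ?case by (simp add: distrib_right free_ext_add)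
qed simp

lemma free_ext_FConst[simp]: "free_ext h (FConst c) = FConst c"
  by (simp add: FConst_def free_ext_single)
lemma free_ext_one[simp]: "free_ext h 1 = 1"
  using free_ext_FConst[of h 1] by simp
lemma free_ext_Gen[simp]: "free_ext h (Gen g) = h g"
  by (simp add: Gen_def free_ext_single)
lemma free_ext_FConst_mult: "free_ext h (FConst c * a) = FConst c * free_ext h a"
  by (simp add: free_ext_mult)

lemma free_ext_prod_list: "free_ext h (prod_list xs) = prod_list (map (free_ext h) xs)"
  by (induction xs) (auto simp: free_ext_mult)

lemma free_ext_comp: "free_ext h2 (free_ext h1 a) = free_ext (free_ext h2 \<circ> h1) a"
proof (induction a rule: pm_induct)
  case (single k v)
  then show ?case by (simp add: free_ext_single free_ext_mult free_ext_prod_list comp_def)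
next
  case (add a b) then show ?case by (simp add: free_ext_add)
qed simp

lemma free_ext_Gen_id: "free_ext Gen a = a"
proof (induction a rule: pm_induct)
  case (single k v)
  then show ?case by (simp add: free_ext_single Gen_word FConst_mult_single)
next
  case (add a b) then show ?case by (simp add: free_ext_add)
qed simp


section \<open>Two-sided ideals\<close>

definition isI :: "('a::ring_1) set \<Rightarrow> bool" where
  "isI I \<longleftrightarrow> 0 \<in> I \<and> (\<forall>a\<in>I. \<forall>b\<in>I. a + b \<in> I) \<and> (\<forall>a\<in>I. \<forall>r. r * a \<in> I \<and> a * r \<in> I)"

lemma tsideal_isI: "isI (tsideal (R::('a::ring_1) set))"
  unfolding isI_def tsideal_def by blast
lemma tsideal_sup: "R \<subseteq> tsideal R"
  unfolding tsideal_def by blast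
lemma tsideal_least: "isI I \<Longrightarrow> R \<subseteq> I \<Longrightarrow> tsideal R \<subseteq> (I::('a::ring_1) set)"
  unfolding isI_def tsideal_def by blast
lemma tsideal_mono: "R \<subseteq> R' \<Longrightarrow> tsideal R \<subseteq> tsideal (R'::('a::ring_1) set)"
  by (meson order_trans tsideal_isI tsideal_least tsideal_sup)

context
  fixes I :: "('a::ring_1) set"
  assumes I: "isI I"
begin
lemma I0: "0 \<in> I" using I unfolding isI_def by blast
lemma Iadd: "a \<in> I \<Longrightarrow> b \<in> I \<Longrightarrow> a + b \<in> I" using I unfolding isI_def by blast
lemma Imultl: "a \<in> I \<Longrightarrow> r * a \<in> I" using I unfolding isI_def by blast
lemma Imultr: "a \<in> I \<Longrightarrow> a * r \<in> I" using I unfolding isI_def by blast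
lemma Iuminus: "a \<in> I \<Longrightarrow> - a \<in> I" using Imultl[of a "-1"] by simp
lemma Idiff: "a \<in> I \<Longrightarrow> b \<in> I \<Longrightarrow> a - b \<in> I" using Iadd[of a "-b"] Iuminus[of b] by simp
lemma Isum: "(\<And>x. x \<in> A \<Longrightarrow> f x \<in> I) \<Longrightarrow> sum f A \<in> I"
  by (induction A rule: infinite_finite_induct) (auto intro: I0 Iadd)

lemma cg_refl: "a - a \<in> I" using I0 by simp
lemma cg_sym: "a - b \<in> I \<Longrightarrow> b - a \<in> I" using Iuminus[of "a - b"] by simp
lemma cg_trans: "a - b \<in> I \<Longrightarrow> b - c \<in> I \<Longrightarrow> a - c \<in> I" using Iadd[of "a - b" "b - c"] by simp
lemma cg_add: "a - b \<in> I \<Longrightarrow> c - d \<in> I \<Longrightarrow> (a + c) - (b + d) \<in> I"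
  using Iadd[of "a - b" "c - d"] by (simp add: algebra_simps)
lemma cg_diff: "a - b \<in> I \<Longrightarrow> c - d \<in> I \<Longrightarrow> (a - c) - (b - d) \<in> I"
  using Idiff[of "a - b" "c - d"] by (simp add: algebra_simps)
lemma cg_mult: "a - b \<in> I \<Longrightarrow> c - d \<in> I \<Longrightarrow> (a * c) - (b * d) \<in> I"
proof -
  assume "a - b \<in> I" "c - d \<in> I"
  then have "(a - b) * c + b * (c - d) \<in> I" by (intro Iadd Imultl Imultr)
  then show ?thesis by (simp add: algebra_simps)
qed
lemma cg_multl: "c - d \<in> I \<Longrightarrow> (a * c) - (a * d) \<in> I" using cg_mult[OF cg_refl] .
lemma cg_multr: "a - b \<in> I \<Longrightarrow> (a * c) - (b * c) \<in> I" using cg_mult[OF _ cg_refl] .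
lemma cg_sum: "(\<And>x. x \<in> A \<Longrightarrow> f x - g x \<in> I) \<Longrightarrow> sum f A - sum g A \<in> I"
  using Isum[of A "\<lambda>x. f x - g x"] by (simp add: sum_subtractf)
lemma cg_eqI: "a - b \<in> I \<Longrightarrow> a = a' \<Longrightarrow> b = b' \<Longrightarrow> a' - b' \<in> I" by simp
end

lemma tsideal_hom:
  fixes f :: "'a::ring_1 \<Rightarrow> 'b::ring_1"
  assumes add: "\<And>a b. f (a + b) = f a + f b" and mult: "\<And>a b. f (a * b) = f a * f b"
    and J: "isI J" and R: "\<And>r. r \<in> R \<Longrightarrow> f r \<in> J"
    and a: "a \<in> tsideal R"
  shows "f a \<in> J"
proof -
  have f0: "f 0 = 0" using add[of 0 0] by simp
  have "isI {a. f a \<in> J}" unfolding isI_def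
    using J by (auto simp: f0 add mult I0 Iadd Imultl Imultr)
  then have "tsideal R \<subseteq> {a. f a \<in> J}" by (rule tsideal_least) (use R in auto)
  then show ?thesis using a by auto
qed


section \<open>Embedding of P into the free algebra\<close>

lemma mono_word_count: "count_list (mono_word m) i = lk m i"
proof -
  have fin: "finite {x. lk m x > 0}"
    by (rule finite_subset[of _ "ks m"]) (auto simp: in_keys_iff)
  obtain xs where "mset xs = Abs_multiset (lk m)" using ex_mset by blast
  then have "\<forall>i. count_list xs i = lk m i"
    using count_Abs_multiset[OF fin] by (metis count_mset)
  then have "\<forall>i. count_list (mono_word m) i = lk m i"
    unfolding mono_word_def by (rule someI)
  then show ?thesis by blast
qed

lemma mset_mono_word_eq: "mset (mono_word m) = mset ys \<longleftrightarrow> (\<forall>i. count_list ys i = lk m i)"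
  by (auto simp: multiset_eq_iff count_mset mono_word_count)

lemma mono_word_0[simp]: "mono_word 0 = []"
proof -
  have "mset (mono_word 0) = mset ([] :: 'a list)" by (subst mset_mono_word_eq) auto
  then show ?thesis by simp
qed

lemma mono_word_single1: "mono_word (sg i 1) = [i]"
proof -
  have "mset (mono_word (sg i 1)) = mset [i]" by (subst mset_mono_word_eq) (auto simp: lookup_single when_def)
  then show ?thesis by simp
qed

lemma mono_word_add: "mset (mono_word (a + b)) = mset (mono_word a @ mono_word b)"
  by (subst mset_mono_word_eq) (auto simp: lookup_add mono_word_count)

lemma length_mono_word: "length (mono_word (m :: 'n::finite \<Rightarrow>\<^sub>0 nat)) = mdeg m"
  using sum_count_set[of "mono_word m" UNIV] by (simp add: mdeg_def mono_word_count)

definition Xw :: "'n list \<Rightarrow> ('n, 'k::field) falg" where "Xw xs = prod_list (map X xs)"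

lemma Xw_single: "Xw xs = sg (FW (map Inl xs)) 1"
  unfolding Xw_def using Gen_word[of "map Inl xs"] by (simp add: comp_def)

lemma Xw_append: "Xw (xs @ ys) = Xw xs * Xw ys" by (simp add: Xw_def)
lemma Xw_Cons: "Xw (x # ys) = X x * Xw ys" by (simp add: Xw_def)
lemma Xw_Nil[simp]: "Xw [] = 1" by (simp add: Xw_def)

lemma emb_superset:
  assumes "finite S" "ks p \<subseteq> S"
  shows "emb p = (\<Sum>m\<in>S. FConst (lk p m) * Xw (mono_word m))"
  unfolding emb_def Xw_def by (rule sum_keys_superset) (use assms in auto)

lemma emb_add: "emb (p + q) = emb p + emb q"
proof -
  let ?S = "ks p \<union> ks q"
  have "emb (p + q) = (\<Sum>m\<in>?S. FConst (lk (p+q) m) * Xw (mono_word m))"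
    by (rule emb_superset) (use keys_add[of p q] in auto)
  also have "\<dots> = (\<Sum>m\<in>?S. FConst (lk p m) * Xw (mono_word m)) + (\<Sum>m\<in>?S. FConst (lk q m) * Xw (mono_word m))"
    by (simp add: lookup_add FConst_add distrib_right sum.distrib)
  also have "\<dots> = emb p + emb q" by (subst (1 2) emb_superset[of ?S]) auto
  finally show ?thesis .
qed

lemma emb_zero[simp]: "emb 0 = 0" by (simp add: emb_def)
lemma emb_single: "emb (sg m c) = FConst c * Xw (mono_word m)"
  by (subst emb_superset[of "{m}"]) auto
lemma emb_uminus: "emb (- p) = - emb p"
  using emb_add[of p "-p"] by (metis add.right_inverse neg_eq_iff_add_eq_0 emb_zero)
lemma emb_diff: "emb (p - q) = emb p - emb q"
  using emb_add[of p "-q"] emb_uminus[of q] by simp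
lemma emb_sum: "emb (sum f A) = (\<Sum>x\<in>A. emb (f x))"
  by (induction A rule: infinite_finite_induct) (auto simp: emb_add)
lemma emb_Const_mult: "emb (Const c * p) = FConst c * emb p"
proof (induction p rule: pm_induct)
  case (single k v) then show ?case by (simp add: Const_mult_single emb_single FConst_mult mult.assoc)
next
  case (add a b) then show ?case by (simp add: distrib_left emb_add)
qed simp
lemma emb_Const: "emb (Const c) = FConst c"
  by (simp add: Const_def emb_single)
lemma emb_one[simp]: "emb 1 = 1"
  using emb_Const[of 1] by simp
lemma emb_Var: "emb (Var i) = X i"
  unfolding Var_def emb_single mono_word_single1 by (simp add: Xw_Cons)

definition CI :: "('n, 'k::field) falg set" where
  "CI = tsideal (range (\<lambda>(i,j). comm (X i) (X j)))"

lemma CI_isI: "isI CI" unfolding CI_def by (rule tsideal_isI)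
lemma comm_XX_CI: "comm (X i) (X j) \<in> CI" unfolding CI_def using tsideal_sup by fast

lemma X_comm_Xw: "X x * Xw zs - Xw zs * X x \<in> (CI :: ('n,'k::field) falg set)"
proof (induction zs)
  case Nil then show ?case by (simp add: I0[OF CI_isI])
next
  case (Cons z zs)
  have "(X x * X z - X z * X x) * Xw zs + X z * (X x * Xw zs - Xw zs * X x) \<in> (CI :: ('n,'k) falg set)"
    using comm_XX_CI[of x z] Cons by (intro Iadd[OF CI_isI] Imultr[OF CI_isI] Imultl[OF CI_isI]) (auto simp: comm_def)
  then show ?case by (simp add: Xw_Cons algebra_simps)
qed

lemma Xw_perm: "mset xs = mset ys \<Longrightarrow> Xw xs - Xw ys \<in> (CI :: ('n,'k::field) falg set)"
proof (induction xs arbitrary: ys)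
  case Nil then show ?case by (simp add: I0[OF CI_isI])
next
  case (Cons x xs)
  then have "x \<in> set ys" by (metis list.set_intros(1) set_mset_mset)
  then obtain ys1 ys2 where ys: "ys = ys1 @ x # ys2" by (meson split_list)
  then have "mset xs = mset (ys1 @ ys2)" using Cons.prems by simp
  then have ih: "Xw xs - Xw (ys1 @ ys2) \<in> (CI :: ('n,'k) falg set)" by (rule Cons.IH)
  have "X x * Xw xs - X x * Xw (ys1 @ ys2) \<in> (CI :: ('n,'k) falg set)" by (rule cg_multl[OF CI_isI ih])
  moreover have "X x * Xw ys1 * Xw ys2 - Xw ys1 * X x * Xw ys2 \<in> (CI :: ('n,'k) falg set)"
    by (rule cg_multr[OF CI_isI X_comm_Xw])
  ultimately have "X x * Xw xs - Xw ys1 * X x * Xw ys2 \<in> (CI :: ('n,'k) falg set)"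
    using cg_trans[OF CI_isI] by (metis Xw_append mult.assoc)
  then show ?case by (simp add: ys Xw_append Xw_Cons mult.assoc)
qed

lemma emb_mult_CI: "emb (p * q) - emb p * emb q \<in> (CI :: ('n::finite,'k::field) falg set)"
proof (induction p rule: pm_induct)
  case zero then show ?case by (simp add: I0[OF CI_isI])
next
  case (single a c)
  show ?case
  proof (induction q rule: pm_induct)
    case zero then show ?case by (simp add: I0[OF CI_isI])
  next
    case (single b d)
    have "Xw (mono_word (a + b)) - Xw (mono_word a @ mono_word b) \<in> (CI :: ('n,'k) falg set)"
      by (rule Xw_perm) (rule mono_word_add)
    then have "FConst (c * d) * Xw (mono_word (a + b)) - FConst (c * d) * Xw (mono_word a @ mono_word b) \<in> (CI :: ('n,'k) falg set)"
      by (rule cg_multl[OF CI_isI])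
    moreover have "FConst (c * d) * Xw (mono_word a @ mono_word b) = emb (sg a c) * (emb (sg b d) :: ('n,'k) falg)"
    proof -
      have "FConst (c * d) * Xw (mono_word a @ mono_word b) = FConst c * (FConst d * Xw (mono_word a)) * (Xw (mono_word b) :: ('n,'k) falg)"
        by (simp add: Xw_append FConst_mult mult.assoc)
      also have "\<dots> = FConst c * (Xw (mono_word a) * FConst d) * Xw (mono_word b)"
        by (simp add: FConst_comm)
      finally show ?thesis by (simp add: emb_single mult.assoc)
    qed
    ultimately show ?case by (simp add: mult_single emb_single)
  next
    case (add q1 q2)
    then show ?case using Iadd[OF CI_isI add(1) add(2)] by (simp add: distrib_left emb_add algebra_simps)
  qed
next
  case (add p1 p2)
  then show ?case using Iadd[OF CI_isI add(1) add(2)] by (simp add: distrib_right emb_add algebra_simps)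
qed

lemma CI_UI: "CI \<subseteq> UI br"
  unfolding CI_def UI_def by (rule tsideal_mono) (auto simp: Urels_def)




lemma UI_isI: "isI (UI br)" unfolding UI_def by (rule tsideal_isI)
lemma Urels_UI: "r \<in> Urels br \<Longrightarrow> r \<in> UI br" unfolding UI_def using tsideal_sup by blast

lemma Ucls_self: "a \<in> Ucls br a" by (simp add: Ucls_def I0[OF UI_isI])

lemma Ucls_eq: "Ucls br a = Ucls br b \<longleftrightarrow> a - b \<in> UI br"
proof
  assume "Ucls br a = Ucls br b"
  then have "b \<in> Ucls br a" using Ucls_self by metis
  then show "a - b \<in> UI br" by (simp add: Ucls_def)
next
  assume ab: "a - b \<in> UI br"
  show "Ucls br a = Ucls br b"
    unfolding Ucls_def using cg_trans[OF UI_isI ab] cg_trans[OF UI_isI cg_sym[OF UI_isI ab]] by blast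
qed

lemma some_Ucls: "a - (SOME x. x \<in> Ucls br a) \<in> UI br"
proof -
  have "(SOME x. x \<in> Ucls br a) \<in> Ucls br a" using Ucls_self by (rule someI)
  then show ?thesis by (simp add: Ucls_def)
qed

lemma Uadd_Ucls: "Uadd br (Ucls br a) (Ucls br b) = Ucls br (a + b)"
proof (intro Set.set_eqI iffI)
  fix c assume "c \<in> Uadd br (Ucls br a) (Ucls br b)"
  then obtain a' b' where h: "a - a' \<in> UI br" "b - b' \<in> UI br" "c - (a' + b') \<in> UI br"
    unfolding Uadd_def Ucls_def by blast
  have "(a + b) - (a' + b') \<in> UI br" by (rule cg_add[OF UI_isI h(1) h(2)])
  then have "(a + b) - c \<in> UI br" by (rule cg_trans[OF UI_isI _ cg_sym[OF UI_isI h(3)]])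
  then show "c \<in> Ucls br (a + b)" unfolding Ucls_def by blast
next
  fix c assume "c \<in> Ucls br (a + b)"
  then have "c - (a + b) \<in> UI br" unfolding Ucls_def using cg_sym[OF UI_isI] by blast
  then show "c \<in> Uadd br (Ucls br a) (Ucls br b)"
    unfolding Uadd_def using Ucls_self by blast
qed

lemma Umult_Ucls: "Umult br (Ucls br a) (Ucls br b) = Ucls br (a * b)"
proof (intro Set.set_eqI iffI)
  fix c assume "c \<in> Umult br (Ucls br a) (Ucls br b)"
  then obtain a' b' where h: "a - a' \<in> UI br" "b - b' \<in> UI br" "c - (a' * b') \<in> UI br"
    unfolding Umult_def Ucls_def by blast
  have "(a * b) - (a' * b') \<in> UI br" by (rule cg_mult[OF UI_isI h(1) h(2)])
  then have "(a * b) - c \<in> UI br" by (rule cg_trans[OF UI_isI _ cg_sym[OF UI_isI h(3)]])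
  then show "c \<in> Ucls br (a * b)" unfolding Ucls_def by blast
next
  fix c assume "c \<in> Ucls br (a * b)"
  then have "c - (a * b) \<in> UI br" unfolding Ucls_def using cg_sym[OF UI_isI] by blast
  then show "c \<in> Umult br (Ucls br a) (Ucls br b)"
    unfolding Umult_def using Ucls_self by blast
qed

lemma Usmul_Ucls: "Usmul br k (Ucls br a) = Ucls br (FConst k * a)"
proof (intro Set.set_eqI iffI)
  fix c assume "c \<in> Usmul br k (Ucls br a)"
  then obtain a' where h: "a - a' \<in> UI br" "c - FConst k * a' \<in> UI br"
    unfolding Usmul_def Ucls_def by blast
  have "FConst k * a - FConst k * a' \<in> UI br" by (rule cg_multl[OF UI_isI h(1)])
  then have "FConst k * a - c \<in> UI br" by (rule cg_trans[OF UI_isI _ cg_sym[OF UI_isI h(2)]])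
  then show "c \<in> Ucls br (FConst k * a)" unfolding Ucls_def by blast
next
  fix c assume "c \<in> Ucls br (FConst k * a)"
  then have "c - FConst k * a \<in> UI br" unfolding Ucls_def using cg_sym[OF UI_isI] by blast
  then show "c \<in> Usmul br k (Ucls br a)"
    unfolding Usmul_def using Ucls_self by blast
qed

lemma Ucarrier_iff: "A \<in> Ucarrier br \<longleftrightarrow> (\<exists>a. A = Ucls br a)"
  by (auto simp: Ucarrier_def)


section \<open>The lift on the free algebra\<close>

lemma Urels_XX: "comm (X i) (X j) \<in> Urels br"
  unfolding Urels_def by (rule UN_I[of i], simp, rule UN_I[of j], simp, simp)
lemma Urels_YY: "comm (Y i) (Y j) - (\<Sum>k\<in>UNIV. emb (pd k (br (Var i) (Var j))) * Y k) \<in> Urels br"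
  unfolding Urels_def by (rule UN_I[of i], simp, rule UN_I[of j], simp, simp)
lemma Urels_YX: "comm (Y i) (X j) - emb (br (Var i) (Var j)) \<in> Urels br"
  unfolding Urels_def by (rule UN_I[of i], simp, rule UN_I[of j], simp, simp)

lemma comm_add2: "comm a (b + c) = comm a b + comm a c" by (simp add: comm_def algebra_simps)
lemma comm_FConst: "comm a (FConst c) = 0" by (simp add: comm_def FConst_comm)

context
  fixes br :: "('n::finite, 'k::field) mpoly \<Rightarrow> ('n, 'k) mpoly \<Rightarrow> ('n, 'k) mpoly"
    and \<phi> :: "('n, 'k) mpoly \<Rightarrow> ('n, 'k) mpoly"
  assumes PB: "poisson_bracket br" and phi: "\<phi> \<in> PAut_gr br"
begin

lemma tg_Inl: "tilde_gen \<phi> (Inl i) = emb (\<phi> (Var i))" by (simp add: tilde_gen_def)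
lemma tg_Inr: "tilde_gen \<phi> (Inr i) = (\<Sum>k\<in>UNIV. FConst (cf \<phi> i k) * Y k)"
  unfolding tilde_gen_def by (auto intro!: sum.cong simp: pd_phi_Var[OF phi] emb_Const)

lemma UI_trans: "a - b \<in> UI br \<Longrightarrow> b - c \<in> UI br \<Longrightarrow> a - c \<in> UI br"
  by (rule cg_trans[OF UI_isI])
lemma UI_sym: "a - b \<in> UI br \<Longrightarrow> b - a \<in> UI br"
  by (rule cg_sym[OF UI_isI])
lemma emb_mult_UI: "emb (p * q) - emb p * emb q \<in> UI br"
  using emb_mult_CI CI_UI by blast

lemma T_CI: "a \<in> CI \<Longrightarrow> free_ext (tilde_gen \<phi>) a \<in> UI br"
  unfolding CI_def
proof (rule tsideal_hom[OF free_ext_add free_ext_mult UI_isI])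
  fix r assume "r \<in> range (\<lambda>(i,j). comm (X i) (X j) :: ('n,'k) falg)"
  then obtain i j where r: "r = comm (X i) (X j)" by auto
  let ?a = "\<phi> (Var i)" and ?b = "\<phi> (Var j)"
  have e1: "emb (?a * ?b) - emb ?a * emb ?b \<in> UI br" by (rule emb_mult_UI)
  have e2: "emb (?b * ?a) - emb ?b * emb ?a \<in> UI br" by (rule emb_mult_UI)
  have "(emb (?b * ?a) - emb ?b * emb ?a) - (emb (?a * ?b) - emb ?a * emb ?b) \<in> UI br"
    by (rule Idiff[OF UI_isI e2 e1])
  then show "free_ext (tilde_gen \<phi>) r \<in> UI br"
    by (simp add: r comm_def free_ext_diff free_ext_mult tg_Inl mult.commute)
qed

lemma T_emb: "free_ext (tilde_gen \<phi>) (emb p) - emb (\<phi> p) \<in> UI br"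
proof (induction p rule: mpoly_induct)
  case (Const c) then show ?case by (simp add: emb_Const phi_Const[OF phi] I0[OF UI_isI])
next
  case (Var i) then show ?case by (simp add: emb_Var tg_Inl I0[OF UI_isI])
next
  case (add p q) then show ?case
    by (simp add: emb_add free_ext_add phi_add[OF phi] cg_add[OF UI_isI])
next
  case (mult p q)
  let ?T = "free_ext (tilde_gen \<phi>)"
  have "emb (p * q) - emb p * emb q \<in> CI" by (rule emb_mult_CI)
  then have "?T (emb (p * q) - emb p * emb q) \<in> UI br" by (rule T_CI)
  then have s1: "?T (emb (p * q)) - ?T (emb p) * ?T (emb q) \<in> UI br"
    by (simp add: free_ext_diff free_ext_mult)
  have s2: "?T (emb p) * ?T (emb q) - emb (\<phi> p) * emb (\<phi> q) \<in> UI br"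
    by (rule cg_mult[OF UI_isI mult(1) mult(2)])
  have s3: "emb (\<phi> p) * emb (\<phi> q) - emb (\<phi> p * \<phi> q) \<in> UI br"
    by (rule UI_sym[OF emb_mult_UI])
  show ?case using UI_trans[OF UI_trans[OF s1 s2] s3] by (simp add: phi_mult[OF phi])
qed

lemma comm_Y_emb: "comm (Y k) (emb p) - emb (br (Var k) p) \<in> UI br"
proof (induction p rule: mpoly_induct)
  case (Const c) then show ?case
    by (simp add: emb_Const comm_FConst br_ConstR[OF PB] I0[OF UI_isI])
next
  case (Var j)
  show ?case by (rule Urels_UI) (auto simp: Urels_def emb_Var)
next
  case (add p q) then show ?case
    by (simp add: emb_add comm_add2 br_add2[OF PB] cg_add[OF UI_isI])
next
  case (mult p q)
  have s1: "comm (Y k) (emb (p * q)) - comm (Y k) (emb p * emb q) \<in> UI br"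
    using cg_diff[OF UI_isI cg_multl[OF UI_isI emb_mult_UI] cg_multr[OF UI_isI emb_mult_UI]]
    by (simp add: comm_def)
  have eq: "comm (Y k) (emb p * emb q) = comm (Y k) (emb p) * emb q + emb p * comm (Y k) (emb q)"
    by (simp add: comm_def algebra_simps)
  have s2: "comm (Y k) (emb p) * emb q + emb p * comm (Y k) (emb q)
      - (emb (br (Var k) p) * emb q + emb p * emb (br (Var k) q)) \<in> UI br"
    by (rule cg_add[OF UI_isI cg_multr[OF UI_isI mult(1)] cg_multl[OF UI_isI mult(2)]])
  have s3: "(emb (br (Var k) p) * emb q + emb p * emb (br (Var k) q))
      - (emb (br (Var k) p * q) + emb (p * br (Var k) q)) \<in> UI br"
    by (rule cg_add[OF UI_isI UI_sym[OF emb_mult_UI] UI_sym[OF emb_mult_UI]])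
  show ?case using UI_trans[OF UI_trans[OF s1 s2[folded eq]] s3]
    by (simp add: br_leibniz[OF PB] emb_add)
qed


lemma prod_sums_FConst:
  "(\<Sum>k\<in>A. FConst (a k) * u k) * (\<Sum>l\<in>B. FConst (b l) * v l)
   = (\<Sum>k\<in>A. \<Sum>l\<in>B. FConst (a k * b l) * (u k * (v l :: ('n,'k) falg)))"
proof -
  have "FConst (a k) * u k * (FConst (b l) * v l) = FConst (a k * b l) * (u k * v l)" for k l
  proof -
    have "FConst (a k) * u k * (FConst (b l) * v l) = FConst (a k) * (u k * FConst (b l)) * v l"
      by (simp add: mult.assoc)
    also have "\<dots> = FConst (a k) * (FConst (b l) * u k) * v l" by (simp add: FConst_comm)
    finally show ?thesis by (simp add: FConst_mult mult.assoc)
  qed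
  then show ?thesis by (simp add: sum_product)
qed

lemma comm_sums_FConst:
  "comm (\<Sum>k\<in>A. FConst (a k) * u k) (\<Sum>l\<in>B. FConst (b l) * v l)
   = (\<Sum>k\<in>A. \<Sum>l\<in>B. FConst (a k * b l) * comm (u k) (v l :: ('n,'k) falg))"
proof -
  have "(\<Sum>l\<in>B. FConst (b l) * v l) * (\<Sum>k\<in>A. FConst (a k) * u k)
      = (\<Sum>l\<in>B. \<Sum>k\<in>A. FConst (b l * a k) * (v l * u k))" by (rule prod_sums_FConst)
  also have "\<dots> = (\<Sum>k\<in>A. \<Sum>l\<in>B. FConst (a k * b l) * (v l * u k))"
    by (subst sum.swap) (simp add: mult.commute)
  finally show ?thesis
    unfolding comm_def prod_sums_FConst by (simp add: sum_subtractf right_diff_distrib)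
qed

lemma comm_sumL_FConst:
  "comm (\<Sum>k\<in>A. FConst (a k) * u k) e = (\<Sum>k\<in>A. FConst (a k) * comm (u k) (e :: ('n,'k) falg))"
proof -
  have "e * (FConst (a k) * u k) = FConst (a k) * (e * u k)" for k
    by (metis FConst_comm mult.assoc)
  then show ?thesis
    by (simp add: comm_def sum_distrib_left sum_distrib_right sum_subtractf right_diff_distrib mult.assoc)
qed

lemma br_phi_Var2:
  "br (\<phi> (Var i)) (\<phi> (Var j)) = (\<Sum>k\<in>UNIV. \<Sum>l\<in>UNIV. Const (cf \<phi> i k * cf \<phi> j l) * br (Var k) (Var l))"
proof -
  have "br (\<phi> (Var i)) (\<phi> (Var j)) = (\<Sum>k\<in>UNIV. Const (cf \<phi> i k) * br (Var k) (\<phi> (Var j)))"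
    by (subst (1) phi_Var[OF phi]) (simp add: br_sum1[OF PB] br_Const1[OF PB])
  also have "\<dots> = (\<Sum>k\<in>UNIV. \<Sum>l\<in>UNIV. Const (cf \<phi> i k * cf \<phi> j l) * br (Var k) (Var l))"
    by (subst phi_Var[OF phi]) (simp add: br_sum2[OF PB] br_Const2[OF PB] sum_distrib_left Const_mult mult.assoc)
  finally show ?thesis .
qed

lemma rel_YX: "free_ext (tilde_gen \<phi>) (comm (Y i) (X j) - emb (br (Var i) (Var j))) \<in> UI br"
proof -
  let ?T = "free_ext (tilde_gen \<phi>)"
  let ?e = "emb (\<phi> (Var j))"
  let ?E = "emb (\<phi> (br (Var i) (Var j)))"
  have A1: "comm (tilde_gen \<phi> (Inr i)) ?e = (\<Sum>k\<in>UNIV. FConst (cf \<phi> i k) * comm (Y k) ?e)"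
    by (simp add: tg_Inr comm_sumL_FConst)
  have A2: "(\<Sum>k\<in>UNIV. FConst (cf \<phi> i k) * comm (Y k) ?e)
     - (\<Sum>k\<in>UNIV. FConst (cf \<phi> i k) * emb (br (Var k) (\<phi> (Var j)))) \<in> UI br"
    by (rule cg_sum[OF UI_isI]) (rule cg_multl[OF UI_isI comm_Y_emb])
  have A3: "(\<Sum>k\<in>UNIV. FConst (cf \<phi> i k) * emb (br (Var k) (\<phi> (Var j)))) = ?E"
  proof -
    have "(\<Sum>k\<in>UNIV. FConst (cf \<phi> i k) * emb (br (Var k) (\<phi> (Var j))))
        = emb (\<Sum>k\<in>UNIV. br (Const (cf \<phi> i k) * Var k) (\<phi> (Var j)))"
      by (simp add: emb_sum emb_Const_mult br_Const1[OF PB])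
    also have "\<dots> = emb (br (\<phi> (Var i)) (\<phi> (Var j)))"
      by (simp add: br_sum1[OF PB, symmetric] phi_Var[OF phi, symmetric])
    finally show ?thesis by (simp add: phi_br[OF phi])
  qed
  have A: "comm (tilde_gen \<phi> (Inr i)) ?e - ?E \<in> UI br" using A1 A2 A3 by simp
  have B: "?T (emb (br (Var i) (Var j))) - ?E \<in> UI br" by (rule T_emb)
  have "(comm (tilde_gen \<phi> (Inr i)) ?e - ?T (emb (br (Var i) (Var j)))) - (?E - ?E) \<in> UI br"
    by (rule cg_diff[OF UI_isI A B])
  then show ?thesis by (simp add: free_ext_diff comm_def free_ext_mult tg_Inl)
qed


lemma sum_swap3: "(\<Sum>m\<in>C. \<Sum>k\<in>A. \<Sum>l\<in>B. h k l m) = (\<Sum>k\<in>A. \<Sum>l\<in>B. \<Sum>m\<in>C. (h k l m :: 'a::comm_monoid_add))"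
proof -
  have "(\<Sum>m\<in>C. \<Sum>k\<in>A. \<Sum>l\<in>B. h k l m) = (\<Sum>k\<in>A. \<Sum>m\<in>C. \<Sum>l\<in>B. h k l m)" by (rule sum.swap)
  also have "\<dots> = (\<Sum>k\<in>A. \<Sum>l\<in>B. \<Sum>m\<in>C. h k l m)" by (rule sum.cong[OF refl]) (rule sum.swap)
  finally show ?thesis .
qed

lemma rel_YY: "free_ext (tilde_gen \<phi>) (comm (Y i) (Y j) - (\<Sum>k\<in>UNIV. emb (pd k (br (Var i) (Var j))) * Y k)) \<in> UI br"
proof -
  let ?T = "free_ext (tilde_gen \<phi>)"
  let ?f = "br (Var i) (Var j)"
  let ?y = "\<lambda>k. tilde_gen \<phi> (Inr k)"
  let ?c = "\<lambda>k l. cf \<phi> i k * cf \<phi> j l"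
  let ?g = "\<lambda>k l m. emb (pd m (br (Var k) (Var l)))"
  let ?E = "\<Sum>m\<in>UNIV. emb (pd m (\<phi> ?f)) * Y m"
  have A1: "comm (?y i) (?y j) = (\<Sum>k\<in>UNIV. \<Sum>l\<in>UNIV. FConst (?c k l) * comm (Y k) (Y l))"
    by (simp add: tg_Inr comm_sums_FConst)
  have A2: "(\<Sum>k\<in>UNIV. \<Sum>l\<in>UNIV. FConst (?c k l) * comm (Y k) (Y l))
     - (\<Sum>k\<in>UNIV. \<Sum>l\<in>UNIV. FConst (?c k l) * (\<Sum>m\<in>UNIV. ?g k l m * Y m)) \<in> UI br"
    by (intro cg_sum[OF UI_isI] cg_multl[OF UI_isI] Urels_UI Urels_YY)
  have A3a: "(\<Sum>k\<in>UNIV. \<Sum>l\<in>UNIV. FConst (?c k l) * (\<Sum>m\<in>UNIV. ?g k l m * Y m))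
     = (\<Sum>k\<in>UNIV. \<Sum>l\<in>UNIV. \<Sum>m\<in>UNIV. FConst (?c k l) * ?g k l m * Y m)"
    by (simp add: sum_distrib_left mult.assoc)
  have A3b: "?E = (\<Sum>m\<in>UNIV. \<Sum>k\<in>UNIV. \<Sum>l\<in>UNIV. FConst (?c k l) * ?g k l m * Y m)"
  proof -
    have s1: "\<phi> ?f = (\<Sum>k\<in>UNIV. \<Sum>l\<in>UNIV. Const (?c k l) * br (Var k) (Var l))"
      by (simp only: phi_br[OF phi] br_phi_Var2)
    have s2: "emb (pd m (\<phi> ?f)) = (\<Sum>k\<in>UNIV. \<Sum>l\<in>UNIV. FConst (?c k l) * ?g k l m)" for m
      by (simp only: s1 pd_sum pd_Const_mult emb_sum emb_Const_mult)
    show ?thesis by (simp only: s2 sum_distrib_right)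
  qed
  have A: "comm (?y i) (?y j) - ?E \<in> UI br"
  proof -
    have E3: "?E = (\<Sum>k\<in>UNIV. \<Sum>l\<in>UNIV. \<Sum>m\<in>UNIV. FConst (?c k l) * ?g k l m * Y m)"
      unfolding A3b by (rule sum_swap3[of "\<lambda>k l m. FConst (?c k l) * ?g k l m * Y m" UNIV UNIV UNIV])
    show ?thesis using A2 unfolding A1 A3a E3[symmetric] .
  qed
  have B1: "(\<Sum>k\<in>UNIV. ?T (emb (pd k ?f)) * ?y k) - (\<Sum>k\<in>UNIV. emb (\<phi> (pd k ?f)) * ?y k) \<in> UI br"
    by (intro cg_sum[OF UI_isI] cg_multr[OF UI_isI] T_emb)
  have pdf: "pd m (\<phi> ?f) = (\<Sum>k\<in>UNIV. Const (cf \<phi> k m) * \<phi> (pd k ?f))" for m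
    by (subst chain_rule[OF phi]) (simp add: pd_phi_Var[OF phi] mult.commute)
  have B2a: "?E = (\<Sum>m\<in>UNIV. \<Sum>k\<in>UNIV. FConst (cf \<phi> k m) * emb (\<phi> (pd k ?f)) * Y m)"
    by (simp add: pdf emb_sum emb_Const_mult sum_distrib_right)
  have B2b: "(\<Sum>k\<in>UNIV. emb (\<phi> (pd k ?f)) * ?y k)
     = (\<Sum>k\<in>UNIV. \<Sum>m\<in>UNIV. FConst (cf \<phi> k m) * emb (\<phi> (pd k ?f)) * Y m)"
  proof -
    have "emb (\<phi> (pd k ?f)) * (FConst (cf \<phi> k m) * Y m) = FConst (cf \<phi> k m) * emb (\<phi> (pd k ?f)) * Y m" for k m
      using FConst_comm[of "cf \<phi> k m" "emb (\<phi> (pd k ?f))"] by (simp add: mult.assoc[symmetric])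
    then show ?thesis by (simp add: tg_Inr sum_distrib_left)
  qed
  have B: "(\<Sum>k\<in>UNIV. ?T (emb (pd k ?f)) * ?y k) - ?E \<in> UI br"
  proof -
    have E2: "?E = (\<Sum>k\<in>UNIV. \<Sum>m\<in>UNIV. FConst (cf \<phi> k m) * emb (\<phi> (pd k ?f)) * Y m)"
      unfolding B2a by (rule sum.swap[of "\<lambda>m k. FConst (cf \<phi> k m) * emb (\<phi> (pd k ?f)) * Y m" UNIV UNIV])
    show ?thesis using B1 unfolding B2b E2[symmetric] .
  qed
  have "(comm (?y i) (?y j) - (\<Sum>k\<in>UNIV. ?T (emb (pd k ?f)) * ?y k)) - (?E - ?E) \<in> UI br"
    by (rule cg_diff[OF UI_isI A B])
  then show ?thesis by (simp add: free_ext_diff free_ext_sum comm_def free_ext_mult)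
qed

lemma T_UI: "a \<in> UI br \<Longrightarrow> free_ext (tilde_gen \<phi>) a \<in> UI br"
  unfolding UI_def
proof (rule tsideal_hom[OF free_ext_add free_ext_mult UI_isI[unfolded UI_def]])
  fix r assume "r \<in> Urels br"
  then obtain i j where "r = comm (X i) (X j) \<or>
     r = comm (Y i) (Y j) - (\<Sum>k\<in>UNIV. emb (pd k (br (Var i) (Var j))) * Y k) \<or>
     r = comm (Y i) (X j) - emb (br (Var i) (Var j))" unfolding Urels_def by blast
  then show "free_ext (tilde_gen \<phi>) r \<in> tsideal (Urels br)"
    using T_CI[OF comm_XX_CI] rel_YY rel_YX unfolding UI_def by blast
qed

end


lemma free_ext_cong_I:
  assumes I: "isI I" and h: "\<And>g. h g - h' g \<in> I"
  shows "free_ext h a - free_ext h' a \<in> I"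
proof -
  have pl: "prod_list (map h w) - prod_list (map h' w) \<in> I" for w
    by (induction w) (auto simp: I0[OF I] intro: cg_mult[OF I h])
  show ?thesis
  proof (induction a rule: pm_induct)
    case zero then show ?case by (simp add: I0[OF I])
  next
    case (single k v) then show ?case by (simp add: free_ext_single cg_multl[OF I pl])
  next
    case (add a b) then show ?case by (simp add: free_ext_add cg_add[OF I])
  qed
qed

lemma Const_inj: "Const a = Const b \<Longrightarrow> a = b"
  unfolding Const_def by (metis lookup_single_eq)

lemma id_PAut: "id \<in> PAut_gr br"
  unfolding PAut_gr_def
proof (intro CollectI conjI allI impI)
  show "bij id" by (rule bij_id)
qed (simp_all only: id_apply)

lemma comp_PAut:
  assumes phi: "\<phi> \<in> PAut_gr br" and psi: "\<psi> \<in> PAut_gr br"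
  shows "\<phi> \<circ> \<psi> \<in> PAut_gr br"
  unfolding PAut_gr_def
proof (intro CollectI conjI allI impI)
  show "bij (\<phi> \<circ> \<psi>)" by (rule bij_comp[OF phi_bij[OF psi] phi_bij[OF phi]])
  show "(\<phi> \<circ> \<psi>) (p + q) = (\<phi> \<circ> \<psi>) p + (\<phi> \<circ> \<psi>) q" for p q
    by (simp only: comp_apply phi_add[OF psi] phi_add[OF phi])
  show "(\<phi> \<circ> \<psi>) (p * q) = (\<phi> \<circ> \<psi>) p * (\<phi> \<circ> \<psi>) q" for p q
    by (simp only: comp_apply phi_mult[OF psi] phi_mult[OF phi])
  show "(\<phi> \<circ> \<psi>) 1 = 1" by (simp add: phi_one[OF psi] phi_one[OF phi])
  show "(\<phi> \<circ> \<psi>) (Const c * p) = Const c * (\<phi> \<circ> \<psi>) p" for c p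
    by (simp only: comp_apply phi_Const_mult[OF psi] phi_Const_mult[OF phi])
  show "(\<phi> \<circ> \<psi>) (br p q) = br ((\<phi> \<circ> \<psi>) p) ((\<phi> \<circ> \<psi>) q)" for p q
    by (simp only: comp_apply phi_br[OF psi] phi_br[OF phi])
  show "homogeneous d ((\<phi> \<circ> \<psi>) p)" if "homogeneous d p" for d p
    using phi_hom[OF phi phi_hom[OF psi that]] by simp
qed

lemma tg_id: "tilde_gen id g = Gen g"
proof (cases g)
  case (Inl i) then show ?thesis by (simp add: tilde_gen_def emb_Var)
next
  case (Inr i)
  have "(\<Sum>j\<in>UNIV. emb (pd j (Var i)) * Y j) = (\<Sum>j\<in>UNIV. if j = i then Y j else (0 :: ('a,'b) falg))"
    by (rule sum.cong) (auto simp: pd_Var emb_Const)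
  then show ?thesis using Inr by (simp add: tilde_gen_def)
qed

lemma free_ext_tg_id: "free_ext (tilde_gen id) a = a"
  by (simp add: tg_id[abs_def] free_ext_Gen_id)

lemma cf_comp:
  assumes phi: "\<phi> \<in> PAut_gr br" and psi: "\<psi> \<in> PAut_gr br"
  shows "cf (\<phi> \<circ> \<psi>) i l = (\<Sum>k\<in>UNIV. cf \<psi> i k * cf \<phi> k l)"
proof -
  have "Const (cf (\<phi> \<circ> \<psi>) i l) = pd l (\<phi> (\<psi> (Var i)))"
    using pd_phi_Var[OF comp_PAut[OF phi psi]] by simp
  also have "\<dots> = (\<Sum>k\<in>UNIV. \<phi> (pd k (\<psi> (Var i))) * pd l (\<phi> (Var k)))"
    by (rule chain_rule[OF phi])
  also have "\<dots> = Const (\<Sum>k\<in>UNIV. cf \<psi> i k * cf \<phi> k l)"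
    by (simp add: pd_phi_Var[OF phi] pd_phi_Var[OF psi] phi_Const[OF phi] Const_sum Const_mult)
  finally show ?thesis by (rule Const_inj)
qed

lemma T_comp:
  assumes PB: "poisson_bracket br" and phi: "\<phi> \<in> PAut_gr br" and psi: "\<psi> \<in> PAut_gr br"
  shows "free_ext (tilde_gen \<phi>) (free_ext (tilde_gen \<psi>) a) - free_ext (tilde_gen (\<phi> \<circ> \<psi>)) a \<in> UI br"
proof -
  have g: "free_ext (tilde_gen \<phi>) (tilde_gen \<psi> g) - tilde_gen (\<phi> \<circ> \<psi>) g \<in> UI br" for g
  proof (cases g)
    case (Inl i)
    then show ?thesis using T_emb[OF PB phi, of "\<psi> (Var i)"] by (simp add: tg_Inl[OF PB phi] tg_Inl[OF PB psi] tg_Inl[OF PB comp_PAut[OF phi psi]])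
  next
    case (Inr i)
    have "free_ext (tilde_gen \<phi>) (tilde_gen \<psi> g) = (\<Sum>k\<in>UNIV. FConst (cf \<psi> i k) * (\<Sum>l\<in>UNIV. FConst (cf \<phi> k l) * Y l))"
      using Inr by (simp add: tg_Inr[OF PB psi] tg_Inr[OF PB phi] free_ext_sum free_ext_mult)
    also have "\<dots> = (\<Sum>k\<in>UNIV. \<Sum>l\<in>UNIV. FConst (cf \<psi> i k * cf \<phi> k l) * Y l)"
      by (simp add: sum_distrib_left FConst_mult mult.assoc)
    also have "\<dots> = (\<Sum>l\<in>UNIV. \<Sum>k\<in>UNIV. FConst (cf \<psi> i k * cf \<phi> k l) * Y l)"
      by (rule sum.swap)
    also have "\<dots> = tilde_gen (\<phi> \<circ> \<psi>) g"
      using Inr by (simp add: tg_Inr[OF PB comp_PAut[OF phi psi]] cf_comp[OF phi psi] FConst_sum sum_distrib_right)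
    finally show ?thesis by (simp add: I0[OF UI_isI])
  qed
  show ?thesis unfolding free_ext_comp by (rule free_ext_cong_I[OF UI_isI]) (simp add: g)
qed

context
  fixes br :: "('n::finite, 'k::field) mpoly \<Rightarrow> ('n, 'k) mpoly \<Rightarrow> ('n, 'k) mpoly"
    and \<phi> :: "('n, 'k) mpoly \<Rightarrow> ('n, 'k) mpoly"
  assumes PB: "poisson_bracket br" and phi: "\<phi> \<in> PAut_gr br"
begin

lemma tilde_Ucls: "tilde br \<phi> (Ucls br a) = Ucls br (free_ext (tilde_gen \<phi>) a)"
proof -
  let ?a = "SOME x. x \<in> Ucls br a"
  have "a - ?a \<in> UI br" by (rule some_Ucls)
  then have "free_ext (tilde_gen \<phi>) (a - ?a) \<in> UI br" by (rule T_UI[OF PB phi])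
  then have "free_ext (tilde_gen \<phi>) ?a - free_ext (tilde_gen \<phi>) a \<in> UI br"
    by (simp add: free_ext_diff cg_sym[OF UI_isI])
  moreover have "Ucls br a \<in> Ucarrier br" by (simp add: Ucarrier_def)
  ultimately show ?thesis unfolding tilde_def by (simp add: Ucls_eq)
qed

lemma tilde_Ucarrier: "A \<in> Ucarrier br \<Longrightarrow> tilde br \<phi> A \<in> Ucarrier br"
  by (auto simp: Ucarrier_def tilde_Ucls)

end

lemma tilde_comp:
  assumes PB: "poisson_bracket br" and phi: "\<phi> \<in> PAut_gr br" and psi: "\<psi> \<in> PAut_gr br"
    and A: "A \<in> Ucarrier br"
  shows "tilde br \<phi> (tilde br \<psi> A) = tilde br (\<phi> \<circ> \<psi>) A"
proof -
  obtain a where a: "A = Ucls br a" using A by (auto simp: Ucarrier_def)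
  show ?thesis using T_comp[OF PB phi psi, of a]
    by (simp add: a tilde_Ucls[OF PB phi] tilde_Ucls[OF PB psi] tilde_Ucls[OF PB comp_PAut[OF phi psi]] Ucls_eq)
qed

lemma tilde_id:
  assumes PB: "poisson_bracket br" and A: "A \<in> Ucarrier br"
  shows "tilde br id A = A"
proof -
  obtain a where a: "A = Ucls br a" using A by (auto simp: Ucarrier_def)
  show ?thesis by (simp add: a tilde_Ucls[OF PB id_PAut] free_ext_tg_id)
qed


section \<open>Grading\<close>

lemma fhom_zero[simp]: "fhom d 0" by (simp add: fhom_def)
lemma fhom_add: "fhom d a \<Longrightarrow> fhom d b \<Longrightarrow> fhom d (a + b)"
  unfolding fhom_def using keys_add[of a b] by blast
lemma fhom_sum: "(\<And>x. x \<in> A \<Longrightarrow> fhom d (f x)) \<Longrightarrow> fhom d (sum f A)"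
  by (induction A rule: infinite_finite_induct) (auto intro: fhom_add)
lemma fhom_single: "fhom (length (fwlist w)) (sg w c)"
  by (simp add: fhom_def)
lemma fhom_mult: "fhom d a \<Longrightarrow> fhom e b \<Longrightarrow> fhom (d + e) (a * b)"
  unfolding fhom_def using keys_mult[of a b] by fastforce
lemma fhom_FConst: "fhom 0 (FConst c)" by (simp add: fhom_def FConst_def)
lemma fhom_FConst_mult: "fhom d a \<Longrightarrow> fhom d (FConst c * a)"
  using fhom_mult[OF fhom_FConst] by fastforce
lemma fhom_Gen: "fhom 1 (Gen g)" by (simp add: fhom_def Gen_def)
lemma fhom_one: "fhom 0 1" using fhom_FConst[of 1] by simp
lemma fhom_prod_list: "(\<And>x. x \<in> set xs \<Longrightarrow> fhom 1 x) \<Longrightarrow> fhom (length xs) (prod_list xs)"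
proof (induction xs)
  case Nil then show ?case by (simp add: fhom_one)
next
  case (Cons a xs)
  have "fhom (1 + length xs) (a * prod_list xs)"
    by (rule fhom_mult) (use Cons in auto)
  then show ?case by simp
qed
lemma fhom_Xw: "fhom (length xs) (Xw xs)"
  by (simp add: Xw_single fhom_def)

lemma fhom_emb: "homogeneous d p \<Longrightarrow> fhom d (emb (p :: ('n::finite,'k::field) mpoly))"
  unfolding emb_def
  by (rule fhom_sum, rule fhom_FConst_mult) (metis fhom_Xw Xw_def length_mono_word homogeneous_def)

lemma fhom_tg:
  assumes phi: "\<phi> \<in> PAut_gr br"
  shows "fhom 1 (tilde_gen \<phi> g)"
proof (cases g)
  case (Inl i)
  have "fhom 1 (emb (\<phi> (Var i)))" by (rule fhom_emb[OF phi_hom[OF phi homogeneous_Var]])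
  then show ?thesis using Inl by (simp only: tilde_gen_def sum.case)
next
  case (Inr i)
  have h: "fhom (0 + 1) (emb (pd j (\<phi> (Var i))) * Y j)" for j
  proof (rule fhom_mult)
    show "fhom 0 (emb (pd j (\<phi> (Var i))))" unfolding pd_phi_Var[OF phi] emb_Const by (rule fhom_FConst)
    show "fhom 1 (Y j)" by (rule fhom_Gen)
  qed
  have "fhom 1 (\<Sum>j\<in>UNIV. emb (pd j (\<phi> (Var i))) * Y j)"
    by (rule fhom_sum) (rule h[unfolded add_0])
  then show ?thesis using Inr by (simp only: tilde_gen_def sum.case)
qed

lemma fhom_T: "\<phi> \<in> PAut_gr br \<Longrightarrow> fhom d a \<Longrightarrow> fhom d (free_ext (tilde_gen \<phi>) a)"
  unfolding free_ext_def
proof (rule fhom_sum, rule fhom_FConst_mult)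
  fix w assume phi: "\<phi> \<in> PAut_gr br" and a: "fhom d a" and w: "w \<in> ks a"
  have "fhom (length (map (tilde_gen \<phi>) (fwlist w))) (prod_list (map (tilde_gen \<phi>) (fwlist w)))"
  proof (rule fhom_prod_list)
    fix x assume "x \<in> set (map (tilde_gen \<phi>) (fwlist w))"
    then obtain g where "x = tilde_gen \<phi> g" by auto
    then show "fhom 1 x" using fhom_tg[OF phi] by simp
  qed
  then show "fhom d (prod_list (map (tilde_gen \<phi>) (fwlist w)))" using a w by (simp add: fhom_def)
qed

lemma tilde_extensional: "tilde br \<phi> \<in> extensional (Ucarrier br)"
  unfolding tilde_def by simp

lemma tilde_Bij:
  assumes PB: "poisson_bracket br" and phi: "\<phi> \<in> PAut_gr br"
  shows "tilde br \<phi> \<in> Bij (Ucarrier br)"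
proof -
  let ?\<psi> = "inv_into UNIV \<phi>"
  have psi: "?\<psi> \<in> PAut_gr br" by (rule inv_PAut[OF phi])
  have b: "bij \<phi>" by (rule phi_bij[OF phi])
  have c1: "?\<psi> \<circ> \<phi> = id" using b inj_iff[of \<phi>] by (simp add: bij_def)
  have c2: "\<phi> \<circ> ?\<psi> = id" using b surj_iff[of \<phi>] by (simp add: bij_def)
  have "bij_betw (tilde br \<phi>) (Ucarrier br) (Ucarrier br)"
  proof (rule bij_betw_byWitness[where f' = "tilde br ?\<psi>"])
    show "\<forall>a\<in>Ucarrier br. tilde br ?\<psi> (tilde br \<phi> a) = a"
      using tilde_comp[OF PB psi phi] tilde_id[OF PB] c1 by simp
    show "\<forall>a\<in>Ucarrier br. tilde br \<phi> (tilde br ?\<psi> a) = a"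
      using tilde_comp[OF PB phi psi] tilde_id[OF PB] c2 by simp
    show "tilde br \<phi> ` Ucarrier br \<subseteq> Ucarrier br" using tilde_Ucarrier[OF PB phi] by blast
    show "tilde br ?\<psi> ` Ucarrier br \<subseteq> Ucarrier br" using tilde_Ucarrier[OF PB psi] by blast
  qed
  then show ?thesis unfolding Bij_def using tilde_extensional by blast
qed

lemma tilde_GrAut:
  assumes PB: "poisson_bracket br" and phi: "\<phi> \<in> PAut_gr br"
  shows "tilde br \<phi> \<in> GrAut_U br"
  unfolding GrAut_U_def
proof (intro CollectI conjI ballI allI)
  show "tilde br \<phi> \<in> Bij (Ucarrier br)" by (rule tilde_Bij[OF PB phi])
  fix A B assume A: "A \<in> Ucarrier br" and B: "B \<in> Ucarrier br"
  obtain a b where a: "A = Ucls br a" and b: "B = Ucls br b" using A B by (auto simp: Ucarrier_def)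
  show "tilde br \<phi> (Uadd br A B) = Uadd br (tilde br \<phi> A) (tilde br \<phi> B)"
    by (simp add: a b Uadd_Ucls tilde_Ucls[OF PB phi] free_ext_add)
  show "tilde br \<phi> (Umult br A B) = Umult br (tilde br \<phi> A) (tilde br \<phi> B)"
    by (simp add: a b Umult_Ucls tilde_Ucls[OF PB phi] free_ext_mult)
next
  fix c A assume A: "A \<in> Ucarrier br"
  obtain a where a: "A = Ucls br a" using A by (auto simp: Ucarrier_def)
  show "tilde br \<phi> (Usmul br c A) = Usmul br c (tilde br \<phi> A)"
    by (simp add: a Usmul_Ucls tilde_Ucls[OF PB phi] free_ext_FConst_mult)
next
  show "tilde br \<phi> (Uone br) = Uone br" by (simp add: Uone_def tilde_Ucls[OF PB phi])
next
  fix d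
  show "tilde br \<phi> ` Udeg br d \<subseteq> Udeg br d"
  proof
    fix B assume "B \<in> tilde br \<phi> ` Udeg br d"
    then obtain a where a: "fhom d a" "B = tilde br \<phi> (Ucls br a)" by (auto simp: Udeg_def)
    then show "B \<in> Udeg br d" using fhom_T[OF phi a(1)] by (auto simp: Udeg_def tilde_Ucls[OF PB phi])
  qed
qed


section \<open>Representation of U(P) on P, injectivity\<close>

definition opP :: "(('n, 'k::field) mpoly \<Rightarrow> ('n, 'k) mpoly \<Rightarrow> ('n, 'k) mpoly) \<Rightarrow> 'n + 'n \<Rightarrow> ('n, 'k) mpoly \<Rightarrow> ('n, 'k) mpoly" where
  "opP br g p = (case g of Inl i \<Rightarrow> Var i * p | Inr i \<Rightarrow> br (Var i) p)"

definition wact where "wact br w p = foldr (opP br) w p"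

definition act :: "(('n, 'k::field) mpoly \<Rightarrow> ('n, 'k) mpoly \<Rightarrow> ('n, 'k) mpoly) \<Rightarrow> ('n, 'k) falg \<Rightarrow> ('n, 'k) mpoly \<Rightarrow> ('n, 'k) mpoly" where
  "act br a p = (\<Sum>w\<in>ks a. Const (lk a w) * wact br (fwlist w) p)"

context
  fixes br :: "('n::finite, 'k::field) mpoly \<Rightarrow> ('n, 'k) mpoly \<Rightarrow> ('n, 'k) mpoly"
  assumes PB: "poisson_bracket br"
begin

lemma opP_add: "opP br g (p + q) = opP br g p + opP br g q"
  by (cases g) (auto simp: opP_def distrib_left br_add2[OF PB])
lemma opP_Const: "opP br g (Const c * p) = Const c * opP br g p"
  by (cases g) (auto simp: opP_def mult.left_commute br_Const2[OF PB])
lemma opP_zero: "opP br g 0 = 0"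
  by (cases g) (auto simp: opP_def br_zero2[OF PB])

lemma wact_add: "wact br w (p + q) = wact br w p + wact br w q"
  by (induction w) (auto simp: wact_def opP_add)
lemma wact_Const: "wact br w (Const c * p) = Const c * wact br w p"
  by (induction w) (auto simp: wact_def opP_Const)
lemma wact_zero: "wact br w 0 = 0"
  by (induction w) (auto simp: wact_def opP_zero)
lemma wact_append: "wact br (u @ v) p = wact br u (wact br v p)"
  by (simp add: wact_def)

lemma act_superset:
  assumes "finite S" "ks a \<subseteq> S"
  shows "act br a p = (\<Sum>w\<in>S. Const (lk a w) * wact br (fwlist w) p)"
  unfolding act_def by (rule sum_keys_superset) (use assms in auto)

lemma act_add: "act br (a + b) p = act br a p + act br b p"
proof -
  let ?S = "ks a \<union> ks b"
  have "act br (a + b) p = (\<Sum>w\<in>?S. Const (lk (a + b) w) * wact br (fwlist w) p)"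
    by (rule act_superset) (use keys_add[of a b] in auto)
  also have "\<dots> = (\<Sum>w\<in>?S. Const (lk a w) * wact br (fwlist w) p) + (\<Sum>w\<in>?S. Const (lk b w) * wact br (fwlist w) p)"
    by (simp add: lookup_add Const_add distrib_right sum.distrib)
  also have "\<dots> = act br a p + act br b p" by (subst (1 2) act_superset[of ?S]) auto
  finally show ?thesis .
qed

lemma act_zero1[simp]: "act br 0 p = 0" by (simp add: act_def)
lemma act_single: "act br (sg w c) p = Const c * wact br (fwlist w) p"
  by (subst act_superset[of "{w}"]) auto
lemma act_uminus: "act br (- a) p = - act br a p"
  using act_add[of a "-a" p] by (metis add.right_inverse neg_eq_iff_add_eq_0 act_zero1)
lemma act_diff: "act br (a - b) p = act br a p - act br b p"
  using act_add[of a "-b" p] act_uminus[of b p] by simp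
lemma act_sum: "act br (sum f A) p = (\<Sum>x\<in>A. act br (f x) p)"
  by (induction A rule: infinite_finite_induct) (auto simp: act_add)

lemma act_addp: "act br a (p + q) = act br a p + act br a q"
  by (induction a rule: pm_induct) (auto simp: act_single wact_add distrib_left act_add)
lemma act_zerop: "act br a 0 = 0"
  by (induction a rule: pm_induct) (auto simp: act_single wact_zero act_add)
lemma act_Constp: "act br a (Const c * p) = Const c * act br a p"
  by (induction a rule: pm_induct) (auto simp: act_single wact_Const act_add distrib_left mult.left_commute)

lemma act_mult: "act br (a * b) p = act br a (act br b p)"
proof (induction a rule: pm_induct)
  case (single u c)
  show ?case
  proof (induction b rule: pm_induct)
    case (single v d)
    then show ?case
      by (simp add: mult_single act_single wact_append wact_Const Const_mult mult.assoc)
  next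
    case (add b1 b2) then show ?case by (simp add: distrib_left act_add act_addp)
  qed (simp add: act_zerop)
next
  case (add a1 a2) then show ?case by (simp add: distrib_right act_add)
qed simp

definition KP where "KP = {a. \<forall>p. act br a p = 0}"

lemma KP_isI: "isI KP"
  unfolding isI_def KP_def by (auto simp: act_add act_mult act_zerop)

lemma act_Gen: "act br (Gen g) p = opP br g p"
  by (simp add: Gen_def act_single wact_def)

lemma act_FConst: "act br (FConst c) p = Const c * p"
  by (simp add: FConst_def act_single wact_def)

lemma CI_KP: "CI \<subseteq> KP"
  unfolding CI_def
proof (rule tsideal_least[OF KP_isI])
  show "range (\<lambda>(i, j). comm (X i) (X j)) \<subseteq> KP"
    by (auto simp: KP_def comm_def act_diff act_mult act_Gen opP_def mult.left_commute)
qed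

lemma act_emb: "act br (emb f) p = f * p"
proof (induction f arbitrary: p rule: mpoly_induct)
  case (Const c) then show ?case by (simp add: emb_Const act_FConst)
next
  case (Var i) then show ?case by (simp add: emb_Var act_Gen opP_def)
next
  case (add f g) then show ?case by (simp add: emb_add act_add distrib_right)
next
  case (mult f g)
  have "emb (f * g) - emb f * emb g \<in> KP" using emb_mult_CI CI_KP by blast
  then have "act br (emb (f * g)) p = act br (emb f * emb g) p"
    by (simp add: KP_def act_diff)
  then show ?case by (simp add: act_mult mult mult.assoc)
qed

lemma UI_KP: "UI br \<subseteq> KP"
  unfolding UI_def
proof (rule tsideal_least[OF KP_isI])
  show "Urels br \<subseteq> KP"
  proof
    fix r assume "r \<in> Urels br"
    then obtain i j where r: "r = comm (X i) (X j) \<or>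
       r = comm (Y i) (Y j) - (\<Sum>k\<in>UNIV. emb (pd k (br (Var i) (Var j))) * Y k) \<or>
       r = comm (Y i) (X j) - emb (br (Var i) (Var j))" unfolding Urels_def by blast
    have 1: "comm (X i) (X j) \<in> KP" by (rule subsetD[OF CI_KP comm_XX_CI])
    have 2: "comm (Y i) (X j) - emb (br (Var i) (Var j)) \<in> KP"
      by (simp add: KP_def comm_def act_diff act_mult act_Gen opP_def act_emb br_leibniz[OF PB])
    have 3: "comm (Y i) (Y j) - (\<Sum>k\<in>UNIV. emb (pd k (br (Var i) (Var j))) * Y k) \<in> KP"
      unfolding KP_def
    proof (intro CollectI allI)
      fix p
      let ?f = "br (Var i) (Var j)"
      have J: "br (Var i) (br (Var j) p) + br (Var j) (br p (Var i)) + br p ?f = 0"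
        by (rule br_jacobi[OF PB])
      have s1: "br (Var j) (br p (Var i)) = - br (Var j) (br (Var i) p)"
        by (subst br_skew[OF PB, of p]) (rule br_uminus2[OF PB])
      have s2: "br p ?f = - br ?f p" by (rule br_skew[OF PB])
      have "br (Var i) (br (Var j) p) - br (Var j) (br (Var i) p) = br ?f p"
        using J unfolding s1 s2 by (simp add: algebra_simps)
      also have "\<dots> = (\<Sum>k\<in>UNIV. pd k ?f * br (Var k) p)" by (rule br_expand[OF PB])
      finally show "act br (comm (Y i) (Y j) - (\<Sum>k\<in>UNIV. emb (pd k ?f) * Y k)) p = 0"
        by (simp add: comm_def act_diff act_sum act_mult act_Gen opP_def act_emb)
    qed
    show "r \<in> KP" using r by (elim disjE) (simp_all only: 1 2 3)
  qed
qed

lemma tilde_inj: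
  assumes phi: "\<phi> \<in> PAut_gr br" and psi: "\<psi> \<in> PAut_gr br" and eq: "tilde br \<phi> = tilde br \<psi>"
  shows "\<phi> = \<psi>"
proof -
  have v: "\<phi> (Var i) = \<psi> (Var i)" for i
  proof -
    have "tilde br \<phi> (Ucls br (X i)) = tilde br \<psi> (Ucls br (X i))" using eq by simp
    then have "Ucls br (emb (\<phi> (Var i))) = Ucls br (emb (\<psi> (Var i)))"
      by (simp add: tilde_Ucls[OF PB phi] tilde_Ucls[OF PB psi] tg_Inl[OF PB phi] tg_Inl[OF PB psi])
    then have "emb (\<phi> (Var i) - \<psi> (Var i)) \<in> KP" using UI_KP by (auto simp: Ucls_eq emb_diff)
    then have "act br (emb (\<phi> (Var i) - \<psi> (Var i))) 1 = 0" by (simp add: KP_def)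
    then show ?thesis by (simp add: act_emb)
  qed
  show ?thesis
  proof
    fix f show "\<phi> f = \<psi> f"
    proof (induction f rule: mpoly_induct)
      case (Const c) then show ?case by (simp add: phi_Const[OF phi] phi_Const[OF psi])
    next
      case (Var i) then show ?case by (rule v)
    next
      case (add f g) then show ?case by (simp add: phi_add[OF phi] phi_add[OF psi])
    next
      case (mult f g) then show ?case by (simp add: phi_mult[OF phi] phi_mult[OF psi])
    qed
  qed
qed

end


lemma GrAutGrp_carrier: "carrier (GrAutGrp_U br) = GrAut_U br"
  by (simp add: GrAutGrp_U_def)
lemma GrAutGrp_mult: "mult (GrAutGrp_U br) = mult (BijGroup (Ucarrier br))"
  by (simp add: GrAutGrp_U_def)
lemma GrAutGrp_one: "one (GrAutGrp_U br) = one (BijGroup (Ucarrier br))"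
  by (simp add: GrAutGrp_U_def)
lemma GrAut_Bij: "GrAut_U br \<subseteq> Bij (Ucarrier br)"
  by (auto simp: GrAut_U_def)

lemma Bij_mult: "f \<in> Bij S \<Longrightarrow> g \<in> Bij S \<Longrightarrow> f \<otimes>\<^bsub>BijGroup S\<^esub> g = compose S f g"
  by (simp add: BijGroup_def)

lemma tilde_mult:
  assumes PB: "poisson_bracket br" and phi: "\<phi> \<in> PAut_gr br" and psi: "\<psi> \<in> PAut_gr br"
  shows "tilde br \<phi> \<otimes>\<^bsub>GrAutGrp_U br\<^esub> tilde br \<psi> = tilde br (\<phi> \<circ> \<psi>)"
proof -
  have "tilde br \<phi> \<otimes>\<^bsub>GrAutGrp_U br\<^esub> tilde br \<psi> = compose (Ucarrier br) (tilde br \<phi>) (tilde br \<psi>)"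
    unfolding GrAutGrp_mult by (rule Bij_mult[OF tilde_Bij[OF PB phi] tilde_Bij[OF PB psi]])
  also have "\<dots> = tilde br (\<phi> \<circ> \<psi>)"
  proof
    fix A show "compose (Ucarrier br) (tilde br \<phi>) (tilde br \<psi>) A = tilde br (\<phi> \<circ> \<psi>) A"
      by (cases "A \<in> Ucarrier br") (simp_all add: compose_def tilde_comp[OF PB phi psi], simp add: tilde_def)
  qed
  finally show ?thesis .
qed

lemma tilde_one:
  assumes PB: "poisson_bracket br"
  shows "\<one>\<^bsub>GrAutGrp_U br\<^esub> = tilde br id"
proof
  fix A show "\<one>\<^bsub>GrAutGrp_U br\<^esub> A = tilde br id A"
    by (cases "A \<in> Ucarrier br") (simp_all add: GrAutGrp_one BijGroup_def tilde_id[OF PB], simp add: tilde_def)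
qed

lemma tilde_inv:
  assumes PB: "poisson_bracket br" and phi: "\<phi> \<in> PAut_gr br"
  shows "inv\<^bsub>GrAutGrp_U br\<^esub> (tilde br \<phi>) = tilde br (inv_into UNIV \<phi>)"
  unfolding m_inv_def
proof (rule the_equality)
  let ?\<psi> = "inv_into UNIV \<phi>"
  have psi: "?\<psi> \<in> PAut_gr br" by (rule inv_PAut[OF phi])
  have b: "bij \<phi>" by (rule phi_bij[OF phi])
  have c1: "?\<psi> \<circ> \<phi> = id" using b inj_iff[of \<phi>] by (simp add: bij_def)
  have c2: "\<phi> \<circ> ?\<psi> = id" using b surj_iff[of \<phi>] by (simp add: bij_def)
  have m1: "tilde br \<phi> \<otimes>\<^bsub>GrAutGrp_U br\<^esub> tilde br ?\<psi> = \<one>\<^bsub>GrAutGrp_U br\<^esub>"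
    by (simp add: tilde_mult[OF PB phi psi] c2 tilde_one[OF PB])
  have m2: "tilde br ?\<psi> \<otimes>\<^bsub>GrAutGrp_U br\<^esub> tilde br \<phi> = \<one>\<^bsub>GrAutGrp_U br\<^esub>"
    by (simp add: tilde_mult[OF PB psi phi] c1 tilde_one[OF PB])
  show "tilde br ?\<psi> \<in> carrier (GrAutGrp_U br) \<and>
    tilde br \<phi> \<otimes>\<^bsub>GrAutGrp_U br\<^esub> tilde br ?\<psi> = \<one>\<^bsub>GrAutGrp_U br\<^esub> \<and>
    tilde br ?\<psi> \<otimes>\<^bsub>GrAutGrp_U br\<^esub> tilde br \<phi> = \<one>\<^bsub>GrAutGrp_U br\<^esub>"
    using m1 m2 tilde_GrAut[OF PB psi] by (simp add: GrAutGrp_carrier)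
  fix y assume y: "y \<in> carrier (GrAutGrp_U br) \<and>
    tilde br \<phi> \<otimes>\<^bsub>GrAutGrp_U br\<^esub> y = \<one>\<^bsub>GrAutGrp_U br\<^esub> \<and>
    y \<otimes>\<^bsub>GrAutGrp_U br\<^esub> tilde br \<phi> = \<one>\<^bsub>GrAutGrp_U br\<^esub>"
  have M: "monoid (BijGroup (Ucarrier br))" using group_BijGroup by (rule group.is_monoid)
  have yB: "y \<in> carrier (BijGroup (Ucarrier br))"
    using y GrAut_Bij by (auto simp: GrAutGrp_carrier BijGroup_def)
  have pB: "tilde br ?\<psi> \<in> carrier (BijGroup (Ucarrier br))"
    using tilde_Bij[OF PB psi] by (simp add: BijGroup_def)
  have fB: "tilde br \<phi> \<in> carrier (BijGroup (Ucarrier br))"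
    using tilde_Bij[OF PB phi] by (simp add: BijGroup_def)
  show "y = tilde br ?\<psi>"
    by (rule monoid.inv_unique[OF M _ _ fB yB pB])
       (use y m1 in \<open>simp_all add: GrAutGrp_mult GrAutGrp_one\<close>)
qed

theorem lemma2p4:
  fixes br :: "('n::finite, 'k::field_char_0) mpoly \<Rightarrow> ('n, 'k) mpoly \<Rightarrow> ('n, 'k) mpoly"
    and G :: "(('n, 'k) mpoly \<Rightarrow> ('n, 'k) mpoly) set"
  assumes alg_closed: "\<forall>p :: 'k poly. degree p > 0 \<longrightarrow> (\<exists>x. poly p x = 0)"
    and quad: "quadratic_poisson br"
    and sub: "subgroup G (PAutGrp br)"
  shows "subgroup (tilde br ` G) (GrAutGrp_U br) \<and>
         tilde br \<in> iso ((PAutGrp br)\<lparr>carrier := G\<rparr>) ((GrAutGrp_U br)\<lparr>carrier := tilde br ` G\<rparr>)"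
proof
  have PB: "poisson_bracket br" using quad by (simp add: quadratic_poisson_def)
  have GP: "G \<subseteq> PAut_gr br" using subgroup.subset[OF sub] by (simp add: PAutGrp_def)
  have Gm: "\<phi> \<circ> \<psi> \<in> G" if "\<phi> \<in> G" "\<psi> \<in> G" for \<phi> \<psi>
    using subgroup.m_closed[OF sub that] by (simp add: PAutGrp_def)
  have G1: "id \<in> G" using subgroup.one_closed[OF sub] by (simp add: PAutGrp_def)
  have Gi: "inv_into UNIV \<phi> \<in> G" if "\<phi> \<in> G" for \<phi>
    using subgroup.m_inv_closed[OF sub that] PAut_m_inv[of \<phi> br] GP that by auto
  show "subgroup (tilde br ` G) (GrAutGrp_U br)"
  proof
    show "tilde br ` G \<subseteq> carrier (GrAutGrp_U br)"
      using GP tilde_GrAut[OF PB] by (auto simp: GrAutGrp_carrier)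
    fix x y assume "x \<in> tilde br ` G" "y \<in> tilde br ` G"
    then obtain \<phi> \<psi> where "\<phi> \<in> G" "\<psi> \<in> G" "x = tilde br \<phi>" "y = tilde br \<psi>" by auto
    then show "x \<otimes>\<^bsub>GrAutGrp_U br\<^esub> y \<in> tilde br ` G"
      using tilde_mult[OF PB, of \<phi> \<psi>] GP Gm by auto
  next
    show "\<one>\<^bsub>GrAutGrp_U br\<^esub> \<in> tilde br ` G" using tilde_one[OF PB] G1 by auto
  next
    fix x assume "x \<in> tilde br ` G"
    then obtain \<phi> where "\<phi> \<in> G" "x = tilde br \<phi>" by auto
    then show "inv\<^bsub>GrAutGrp_U br\<^esub> x \<in> tilde br ` G"
      using tilde_inv[OF PB, of \<phi>] GP Gi by auto
  qed
  show "tilde br \<in> iso ((PAutGrp br)\<lparr>carrier := G\<rparr>) ((GrAutGrp_U br)\<lparr>carrier := tilde br ` G\<rparr>)"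
    unfolding iso_def hom_def
  proof (intro CollectI conjI ballI)
    show "tilde br \<in> carrier ((PAutGrp br)\<lparr>carrier := G\<rparr>) \<rightarrow> carrier ((GrAutGrp_U br)\<lparr>carrier := tilde br ` G\<rparr>)"
      by auto
    fix x y assume "x \<in> carrier ((PAutGrp br)\<lparr>carrier := G\<rparr>)" "y \<in> carrier ((PAutGrp br)\<lparr>carrier := G\<rparr>)"
    then have "x \<in> PAut_gr br" "y \<in> PAut_gr br" using GP by auto
    then show "tilde br (x \<otimes>\<^bsub>(PAutGrp br)\<lparr>carrier := G\<rparr>\<^esub> y) =
        tilde br x \<otimes>\<^bsub>(GrAutGrp_U br)\<lparr>carrier := tilde br ` G\<rparr>\<^esub> tilde br y"
      using tilde_mult[OF PB] by (simp add: PAutGrp_def)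
  next
    have "inj_on (tilde br) G"
      by (rule inj_onI) (use GP tilde_inj[OF PB] in blast)
    then show "bij_betw (tilde br) (carrier ((PAutGrp br)\<lparr>carrier := G\<rparr>)) (carrier ((GrAutGrp_U br)\<lparr>carrier := tilde br ` G\<rparr>))"
      by (simp add: bij_betw_def)
  qed
qed


end
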